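(* Let $F$ be a VSCC (over linear profiles) satisfying Anonymity, Neutrality, Upward Homogeneity (in particular, if it satisfies Homogeneity), Neutral Reversal, Monotonicity for two-candidate profiles (in particular, if it satisfies Monotonicity), and Coherent IIA. Then $SC(\mathbf P)\subseteq F(\mathbf P)$ for every profile $\mathbf P$, where $SC$ is the Split Cycle VSCC.
   Context: Profiles: $\mathbf P:V\to\mathcal L(X)$ with $V$ a nonempty finite set of voters, $X=X(\mathbf P)$ a nonempty finite set of candidates (from fixed infinite sets), $\mathcal L(X)$ strict linear orders; $\mathbf P_{|Y}$ restricts ballots to $Y$. $\mathrm{Margin}_{\mathbf P}(x,y)$ = #voters ranking $x$ above $y$ minus #ranking $y$ above $x$. $\mathcal M(\mathbf P)$: directed graph on $X(\mathbf P)$ with edge $x\to y$ of weight $\mathrm{Margin}_{\mathbf P}(x,y)$ when positive. Majority path: sequence of candidates with positive consecutive margins; strength = minimum of those margins. $(x,y)\in sc(\mathbf P)$ iff $\mathrm{Margin}_{\mathbf P}(x,y)>0$ and it exceeds the strength of every majority path from $y$ to $x$; $SC(\mathbf P)$ = candidates $y$ such that no $x$ has $(x,y)\in sc(\mathbf P)$. A VSCC is $F$ with $\varnothing\ne F(\mathbf P)\subseteq X(\mathbf P)$. Axioms: Anonymity (permuting which voter casts which ballot, same voter set, leaves $F$ unchanged); Neutrality (if a bijection $\pi$ of candidates transforms $\mathbf P$ into $\mathbf P'$ ballot by ballot, with same voters and candidates, then $x\in F(\mathbf P)\iff\pi(x)\in F(\mathbf P')$); Homogeneity $F(\mathbf P)=F(2\mathbf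 P)$, Upward Homogeneity $F(\mathbf P)\supseteq F(2\mathbf P)$ ($2\mathbf P$ replaces each voter by two copies); Neutral Reversal (adding two voters with converse ballots leaves $F$ unchanged); Monotonicity (resp. for two-candidate profiles): for any profile (resp. two-candidate profile), if $\mathbf P'$ is obtained by swapping $x$ with the candidate immediately above it in one ballot, $x\in F(\mathbf P)$ implies $x\in F(\mathbf P')$; Coherent IIA: write $\mathbf P\rightsquigarrow_{x,y}\mathbf P'$ if $\mathbf P_{|\{x,y\}}=\mathbf P'_{|\{x,y\}}$ and $\mathcal M(\mathbf P')$ is obtainable from $\mathcal M(\mathbf P)$ by deleting zero or more candidates other than $x,y$ and deleting or reducing weights of zero or more edges not connecting $x$ and $y$; if $y\notin F(\mathbf P)$ then some $x\in X(\mathbf P)$ satisfies $y\notin F(\mathbf P')$ for all $\mathbf P'$ with $\mathbf P\rightsquigarrow_{x,y}\mathbf P'$. *)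

theory Defs
  imports Main
begin

text \<open>A profile: voter set, candidate set, and a ballot for each voter.
  A ballot is a relation; (a,b) \<in> ballot P i means voter i ranks a above b.\<close>

record ('v, 'c) profile =
  voters :: "'v set"
  cands  :: "'c set"
  ballot :: "'v \<Rightarrow> 'c rel"

definition wf_profile :: "('v, 'c) profile \<Rightarrow> bool" where
  "wf_profile P \<longleftrightarrow>
     finite (voters P) \<and> voters P \<noteq> {} \<and> finite (cands P) \<and> cands P \<noteq> {} \<and>
     (\<forall>i\<in>voters P. ballot P i \<subseteq> cands P \<times> cands P \<and>
                    strict_linear_order_on (cands P) (ballot P i)) \<and>
     (\<forall>i. i \<notin> voters P \<longrightarrow> ballot P i = {})"

definition margin :: "('v, 'c) profile \<Rightarrow> 'c \<Rightarrow> 'c \<Rightarrow> int" where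
  "margin P x y =
     int (card {i \<in> voters P. (x, y) \<in> ballot P i}) - int (card {i \<in> voters P. (y, x) \<in> ballot P i})"

definition majority_path :: "('v, 'c) profile \<Rightarrow> 'c list \<Rightarrow> 'c \<Rightarrow> 'c \<Rightarrow> bool" where
  "majority_path P cs a b \<longleftrightarrow>
     length cs \<ge> 2 \<and> set cs \<subseteq> cands P \<and> hd cs = a \<and> last cs = b \<and>
     (\<forall>k. Suc k < length cs \<longrightarrow> margin P (cs ! k) (cs ! Suc k) > 0)"

definition path_strength :: "('v, 'c) profile \<Rightarrow> 'c list \<Rightarrow> int" where
  "path_strength P cs = Min {margin P (cs ! k) (cs ! Suc k) | k. Suc k < length cs}"

definition sc_defeat :: "('v, 'c) profile \<Rightarrow> 'c \<Rightarrow> 'c \<Rightarrow> bool" where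
  "sc_defeat P x y \<longleftrightarrow>
     margin P x y > 0 \<and> (\<forall>cs. majority_path P cs y x \<longrightarrow> margin P x y > path_strength P cs)"

definition split_cycle :: "('v, 'c) profile \<Rightarrow> 'c set" where
  "split_cycle P = {y \<in> cands P. \<not> (\<exists>x. sc_defeat P x y)}"

definition VSCC :: "(('v, 'c) profile \<Rightarrow> 'c set) \<Rightarrow> bool" where
  "VSCC F \<longleftrightarrow> (\<forall>P. wf_profile P \<longrightarrow> F P \<noteq> {} \<and> F P \<subseteq> cands P)"

definition anonymity :: "(('v, 'c) profile \<Rightarrow> 'c set) \<Rightarrow> bool" where
  "anonymity F \<longleftrightarrow> (\<forall>P P' \<sigma>. wf_profile P \<and> wf_profile P' \<and>
      voters P' = voters P \<and> cands P' = cands P \<and> bij_betw \<sigma> (voters P) (voters P) \<and>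
      (\<forall>i\<in>voters P. ballot P' i = ballot P (\<sigma> i)) \<longrightarrow> F P' = F P)"

definition neutrality :: "(('v, 'c) profile \<Rightarrow> 'c set) \<Rightarrow> bool" where
  "neutrality F \<longleftrightarrow> (\<forall>P P' \<pi>. wf_profile P \<and> wf_profile P' \<and>
      voters P' = voters P \<and> cands P' = cands P \<and> bij_betw \<pi> (cands P) (cands P) \<and>
      (\<forall>i\<in>voters P. ballot P' i = (\<lambda>(a, b). (\<pi> a, \<pi> b)) ` ballot P i) \<longrightarrow>
      (\<forall>x\<in>cands P. x \<in> F P \<longleftrightarrow> \<pi> x \<in> F P'))"

definition doubling :: "('v, 'c) profile \<Rightarrow> ('v, 'c) profile \<Rightarrow> bool" where
  "doubling P P' \<longleftrightarrow> cands P' = cands P \<and>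
     (\<exists>f. f ` voters P' = voters P \<and>
          (\<forall>i\<in>voters P. card {j \<in> voters P'. f j = i} = 2) \<and>
          (\<forall>j\<in>voters P'. ballot P' j = ballot P (f j)))"

definition homogeneity :: "(('v, 'c) profile \<Rightarrow> 'c set) \<Rightarrow> bool" where
  "homogeneity F \<longleftrightarrow> (\<forall>P P'. wf_profile P \<and> wf_profile P' \<and> doubling P P' \<longrightarrow> F P' = F P)"

definition upward_homogeneity :: "(('v, 'c) profile \<Rightarrow> 'c set) \<Rightarrow> bool" where
  "upward_homogeneity F \<longleftrightarrow> (\<forall>P P'. wf_profile P \<and> wf_profile P' \<and> doubling P P' \<longrightarrow> F P' \<subseteq> F P)"

definition neutral_reversal :: "(('v, 'c) profile \<Rightarrow> 'c set) \<Rightarrow> bool" where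
  "neutral_reversal F \<longleftrightarrow> (\<forall>P P' i j. wf_profile P \<and> wf_profile P' \<and>
      i \<notin> voters P \<and> j \<notin> voters P \<and> i \<noteq> j \<and>
      voters P' = voters P \<union> {i, j} \<and> cands P' = cands P \<and>
      ballot P' j = converse (ballot P' i) \<and>
      (\<forall>k\<in>voters P. ballot P' k = ballot P k) \<longrightarrow> F P' = F P)"

definition immediately_above :: "'c rel \<Rightarrow> 'c \<Rightarrow> 'c \<Rightarrow> bool" where
  "immediately_above R y x \<longleftrightarrow> (y, x) \<in> R \<and> \<not> (\<exists>z. (y, z) \<in> R \<and> (z, x) \<in> R)"

definition swap_up :: "'c rel \<Rightarrow> 'c \<Rightarrow> 'c \<Rightarrow> 'c rel" where
  "swap_up R y x = (R - {(y, x)}) \<union> {(x, y)}"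

definition monotonicity :: "(('v, 'c) profile \<Rightarrow> 'c set) \<Rightarrow> bool" where
  "monotonicity F \<longleftrightarrow> (\<forall>P P' i x y. wf_profile P \<and> i \<in> voters P \<and>
      immediately_above (ballot P i) y x \<and>
      voters P' = voters P \<and> cands P' = cands P \<and>
      ballot P' = (ballot P)(i := swap_up (ballot P i) y x) \<and> x \<in> F P \<longrightarrow> x \<in> F P')"

definition monotonicity_two :: "(('v, 'c) profile \<Rightarrow> 'c set) \<Rightarrow> bool" where
  "monotonicity_two F \<longleftrightarrow> (\<forall>P P' i x y. wf_profile P \<and> card (cands P) = 2 \<and> i \<in> voters P \<and>
      immediately_above (ballot P i) y x \<and>
      voters P' = voters P \<and> cands P' = cands P \<and>
      ballot P' = (ballot P)(i := swap_up (ballot P i) y x) \<and> x \<in> F P \<longrightarrow> x \<in> F P')"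

definition coherent_step :: "('v, 'c) profile \<Rightarrow> 'c \<Rightarrow> 'c \<Rightarrow> ('v, 'c) profile \<Rightarrow> bool" where
  "coherent_step P x y P' \<longleftrightarrow>
     voters P' = voters P \<and> x \<in> cands P' \<and> y \<in> cands P' \<and> cands P' \<subseteq> cands P \<and>
     (\<forall>i\<in>voters P. ballot P' i \<inter> ({x, y} \<times> {x, y}) = ballot P i \<inter> ({x, y} \<times> {x, y})) \<and>
     (\<forall>a\<in>cands P'. \<forall>b\<in>cands P'. margin P' a b > 0 \<longrightarrow>
        margin P a b > 0 \<and> margin P' a b \<le> margin P a b \<and>
        ({a, b} = {x, y} \<longrightarrow> margin P' a b = margin P a b)) \<and>
     (margin P x y > 0 \<longrightarrow> margin P' x y = margin P x y) \<and>
     (margin P y x > 0 \<longrightarrow> margin P' y x = margin P y x)"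

definition coherent_IIA :: "(('v, 'c) profile \<Rightarrow> 'c set) \<Rightarrow> bool" where
  "coherent_IIA F \<longleftrightarrow> (\<forall>P y. wf_profile P \<and> y \<in> cands P \<and> y \<notin> F P \<longrightarrow>
      (\<exists>x\<in>cands P. \<forall>P'. wf_profile P' \<and> coherent_step P x y P' \<longrightarrow> y \<notin> F P'))"

end

theory Submission
  imports Defs
begin

definition wt :: "'c rel \<Rightarrow> 'c \<Rightarrow> 'c \<Rightarrow> int" where
  "wt R a b = (if (a,b) \<in> R then 1 else 0) - (if (b,a) \<in> R then 1 else 0)"

lemma card_int_sum:
  assumes "finite V"
  shows "int (card {v \<in> V. p v}) = (\<Sum>v\<in>V. if p v then 1 else 0)"
proof -
  have "(\<Sum>v\<in>V. if p v then 1 else 0) = (\<Sum>v\<in>{v \<in> V. p v}. 1::int)"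
    by (rule sum.inter_filter[OF assms, symmetric])
  also have "\<dots> = int (card {v \<in> V. p v})" by simp
  finally show ?thesis by simp
qed

lemma margin_sum:
  assumes "finite (voters P)"
  shows "margin P a b = (\<Sum>v\<in>voters P. wt (ballot P v) a b)"
  unfolding margin_def wt_def card_int_sum[OF assms] by (simp add: sum_subtractf)

lemma margin_anti: "margin P a b = - margin P b a"
  unfolding margin_def by simp

lemma wfD:
  assumes "wf_profile P" "v \<in> voters P"
  shows "ballot P v \<subseteq> cands P \<times> cands P" "trans (ballot P v)" "irrefl (ballot P v)"
    "total_on (cands P) (ballot P v)"
  using assms unfolding wf_profile_def strict_linear_order_on_def by auto

lemma wf_fin: "wf_profile P \<Longrightarrow> finite (voters P)" "wf_profile P \<Longrightarrow> finite (cands P)"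
  "wf_profile P \<Longrightarrow> voters P \<noteq> {}" "wf_profile P \<Longrightarrow> cands P \<noteq> {}"
  unfolding wf_profile_def by auto

lemma wf_out: "wf_profile P \<Longrightarrow> v \<notin> voters P \<Longrightarrow> ballot P v = {}"
  unfolding wf_profile_def by auto

lemma slo_asym:
  assumes "trans R" "irrefl R" "(a,b) \<in> R" shows "(b,a) \<notin> R"
  using assms unfolding trans_def irrefl_def by blast

lemma ballot_pair:
  assumes "wf_profile P" "v \<in> voters P" "a \<in> cands P" "b \<in> cands P" "a \<noteq> b"
  shows "(a,b) \<in> ballot P v \<longleftrightarrow> (b,a) \<notin> ballot P v"
  using wfD[OF assms(1,2)] assms(3-5) slo_asym unfolding total_on_def by metis

lemma margin_cong:
  assumes "voters P = voters Q"
    "\<And>v. v \<in> voters P \<Longrightarrow> ((a,b) \<in> ballot P v \<longleftrightarrow> (a,b) \<in> ballot Q v) \<and> ((b,a) \<in> ballot P v \<longleftrightarrow> (b,a) \<in> ballot Q v)"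
  shows "margin P a b = margin Q a b"
proof -
  have "{i \<in> voters P. (a, b) \<in> ballot P i} = {i \<in> voters Q. (a, b) \<in> ballot Q i}"
    "{i \<in> voters P. (b, a) \<in> ballot P i} = {i \<in> voters Q. (b, a) \<in> ballot Q i}"
    using assms by auto
  then show ?thesis unfolding margin_def by simp
qed

definition restrict :: "('v,'c) profile \<Rightarrow> 'c set \<Rightarrow> ('v,'c) profile" where
  "restrict P S = P\<lparr>cands := S, ballot := \<lambda>v. ballot P v \<inter> (S \<times> S)\<rparr>"

lemma restrict_wf:
  assumes "wf_profile P" "S \<subseteq> cands P" "S \<noteq> {}"
  shows "wf_profile (restrict P S)"
proof -
  have "finite S" using assms wf_fin finite_subset by metis
  have "strict_linear_order_on S (ballot P v \<inter> S \<times> S)" if "v \<in> voters P" for v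
    using wfD[OF assms(1) that] assms(2) unfolding strict_linear_order_on_def
      trans_def irrefl_def total_on_def by blast
  with \<open>finite S\<close> show ?thesis using assms unfolding wf_profile_def restrict_def by auto
qed

lemma restrict_margin:
  assumes "a \<in> S" "b \<in> S"
  shows "margin (restrict P S) a b = margin P a b"
  by (rule margin_cong) (use assms in \<open>auto simp: restrict_def\<close>)

definition img :: "('c \<Rightarrow> 'c) \<Rightarrow> 'c rel \<Rightarrow> 'c rel" where
  "img \<pi> R = (\<lambda>(a, b). (\<pi> a, \<pi> b)) ` R"

lemma sym_lemma:
  assumes N: "neutrality F" and A: "anonymity F" and wf: "wf_profile Q"
    and pi: "bij_betw \<pi> (cands Q) (cands Q)" and sig: "bij_betw \<sigma> (voters Q) (voters Q)"
    and bal: "\<And>v. v \<in> voters Q \<Longrightarrow> ballot Q (\<sigma> v) = img \<pi> (ballot Q v)"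
    and a: "a \<in> cands Q"
  shows "a \<in> F Q \<longleftrightarrow> \<pi> a \<in> F Q"
proof -
  define Q' where "Q' = Q\<lparr>ballot := \<lambda>v. if v \<in> voters Q then ballot Q (\<sigma> v) else {}\<rparr>"
  have s: "\<And>v. v \<in> voters Q \<Longrightarrow> \<sigma> v \<in> voters Q" using sig bij_betwE by blast
  have wf': "wf_profile Q'" using wf s unfolding Q'_def wf_profile_def by auto
  have "F Q' = F Q" using A[unfolded anonymity_def, rule_format, of Q Q' \<sigma>] wf wf' sig by (auto simp: Q'_def)
  moreover have "a \<in> F Q \<longleftrightarrow> \<pi> a \<in> F Q'"
    using N[unfolded neutrality_def, rule_format, of Q Q' \<pi>] wf wf' pi a bal by (auto simp: Q'_def img_def)
  ultimately show ?thesis by simp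
qed


lemma ballot2:
  assumes "wf_profile Q" "cands Q = {x,y}" "x \<noteq> y" "v \<in> voters Q"
  shows "ballot Q v = {(x,y)} \<or> ballot Q v = {(y,x)}"
proof -
  have "ballot Q v \<subseteq> {x,y} \<times> {x,y}" using wfD(1)[OF assms(1,4)] assms(2) by simp
  moreover have "(x,x) \<notin> ballot Q v" "(y,y) \<notin> ballot Q v" using wfD(3)[OF assms(1,4)] unfolding irrefl_def by auto
  moreover have "(x,y) \<in> ballot Q v \<longleftrightarrow> (y,x) \<notin> ballot Q v" using assms(2,3) by (intro ballot_pair[OF assms(1,4)]) auto
  ultimately have "ballot Q v \<subseteq> {(x,y),(y,x)}" by blast
  then show ?thesis using \<open>(x,y) \<in> ballot Q v \<longleftrightarrow> (y,x) \<notin> ballot Q v\<close> by blast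
qed

definition swp :: "'c \<Rightarrow> 'c \<Rightarrow> 'c \<Rightarrow> 'c" where
  "swp x y a = (if a = x then y else if a = y then x else a)"

lemma VSCC_D: "VSCC F \<Longrightarrow> wf_profile P \<Longrightarrow> F P \<noteq> {}" "VSCC F \<Longrightarrow> wf_profile P \<Longrightarrow> F P \<subseteq> cands P"
  unfolding VSCC_def by auto

lemma tie2:
  assumes N: "neutrality F" and A: "anonymity F" and V: "VSCC F"
    and wf: "wf_profile Q" and c: "cands Q = {x,y}" and xy: "x \<noteq> y" and m: "margin Q y x = 0"
  shows "y \<in> F Q"
proof -
  define Ax where "Ax = {v \<in> voters Q. (x,y) \<in> ballot Q v}"
  define By where "By = {v \<in> voters Q. (y,x) \<in> ballot Q v}"
  have fin: "finite (voters Q)" using wf wf_fin by auto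
  have fA: "finite Ax" "finite By" using fin unfolding Ax_def By_def by auto
  have "card Ax = card By" using m unfolding margin_def Ax_def By_def by simp
  then obtain g where g: "bij_betw g Ax By" using finite_same_card_bij fA by metis
  have b2: "\<And>v. v \<in> voters Q \<Longrightarrow> ballot Q v = {(x,y)} \<or> ballot Q v = {(y,x)}"
    using ballot2[OF wf c xy] by blast
  have disj: "Ax \<inter> By = {}" using xy unfolding Ax_def By_def using b2 by fastforce
  have un: "voters Q = Ax \<union> By" unfolding Ax_def By_def using b2 by fastforce
  define \<sigma> where "\<sigma> v = (if v \<in> Ax then g v else the_inv_into Ax g v)" for v
  have "bij_betw \<sigma> (Ax \<union> By) (By \<union> Ax)"
  proof (rule bij_betw_combine)
    show "bij_betw \<sigma> Ax By" using g by (subst bij_betw_cong[of _ _ g]) (auto simp: \<sigma>_def)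
    show "bij_betw \<sigma> By Ax" using bij_betw_the_inv_into[OF g] disj
      by (subst bij_betw_cong[of _ _ "the_inv_into Ax g"]) (auto simp: \<sigma>_def)
  qed (use disj in auto)
  then have sig: "bij_betw \<sigma> (voters Q) (voters Q)" using un by (simp add: Un_commute)
  have pi: "bij_betw (swp x y) (cands Q) (cands Q)"
    unfolding c bij_betw_def inj_on_def swp_def using xy by auto
  have bal: "ballot Q (\<sigma> v) = img (swp x y) (ballot Q v)" if v: "v \<in> voters Q" for v
  proof (cases "v \<in> Ax")
    case True
    then have "\<sigma> v \<in> By" using g \<sigma>_def bij_betwE by fastforce
    then have "ballot Q (\<sigma> v) = {(y,x)}" unfolding By_def using b2 xy by fastforce
    moreover have "ballot Q v = {(x,y)}" using True unfolding Ax_def using b2 xy by fastforce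
    ultimately show ?thesis by (simp add: img_def swp_def)
  next
    case False
    then have vB: "v \<in> By" using un v by auto
    then have "\<sigma> v \<in> Ax" using False \<sigma>_def bij_betwE[OF bij_betw_the_inv_into[OF g]] by fastforce
    then have "ballot Q (\<sigma> v) = {(x,y)}" unfolding Ax_def using b2 xy by fastforce
    moreover have "ballot Q v = {(y,x)}" using vB unfolding By_def using b2 xy by fastforce
    ultimately show ?thesis using xy by (simp add: img_def swp_def)
  qed
  have key: "a \<in> F Q \<longleftrightarrow> swp x y a \<in> F Q" if "a \<in> cands Q" for a
    using sym_lemma[OF N A wf pi sig bal that] by blast
  obtain a where a: "a \<in> F Q" using VSCC_D[OF V wf] by blast
  then have "a = x \<or> a = y" using VSCC_D[OF V wf] c by auto
  then show ?thesis using key[of x] a c by (auto simp: swp_def)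
qed

lemma even2:
  assumes N: "neutrality F" and A: "anonymity F" and V: "VSCC F" and M: "monotonicity_two F"
  shows "wf_profile Q \<Longrightarrow> cands Q = {x,y} \<Longrightarrow> x \<noteq> y \<Longrightarrow> margin Q y x = 2 * int d \<Longrightarrow> y \<in> F Q"
proof (induction d arbitrary: Q)
  case 0
  then show ?case using tie2[OF N A V] by simp
next
  case (Suc d)
  note wf = Suc.prems(1) and c = Suc.prems(2) and xy = Suc.prems(3)
  have fin: "finite (voters Q)" using wf wf_fin by auto
  have "card {v \<in> voters Q. (y,x) \<in> ballot Q v} > 0" using Suc.prems(4) unfolding margin_def by simp
  then obtain v where v: "v \<in> voters Q" and vyx: "(y,x) \<in> ballot Q v"
    by (metis (no_types, lifting) card_gt_0_iff empty_Collect_eq mem_Collect_eq)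
  have bv: "ballot Q v = {(y,x)}" using ballot2[OF wf c xy v] vyx xy by auto
  define Q0 where "Q0 = Q\<lparr>ballot := (ballot Q)(v := {(x,y)})\<rparr>"
  have wf0: "wf_profile Q0" using wf v xy c unfolding Q0_def wf_profile_def strict_linear_order_on_def
      trans_def irrefl_def total_on_def by auto
  have "margin Q y x = wt (ballot Q v) y x + (\<Sum>w\<in>voters Q - {v}. wt (ballot Q w) y x)"
    using margin_sum[OF fin] sum.remove[OF fin v] by metis
  moreover have "margin Q0 y x = wt (ballot Q0 v) y x + (\<Sum>w\<in>voters Q - {v}. wt (ballot Q0 w) y x)"
  proof -
    have "voters Q0 = voters Q" by (simp add: Q0_def)
    then have "margin Q0 y x = (\<Sum>w\<in>voters Q. wt (ballot Q0 w) y x)" using margin_sum[of Q0] fin by metis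
    also have "\<dots> = wt (ballot Q0 v) y x + (\<Sum>w\<in>voters Q - {v}. wt (ballot Q0 w) y x)"
      by (rule sum.remove[OF fin v])
    finally show ?thesis .
  qed
  moreover have "(\<Sum>w\<in>voters Q - {v}. wt (ballot Q0 w) y x) = (\<Sum>w\<in>voters Q - {v}. wt (ballot Q w) y x)"
    by (rule sum.cong) (auto simp: Q0_def)
  ultimately have "margin Q0 y x = margin Q y x - 2" using bv xy by (simp add: Q0_def wt_def)
  then have "margin Q0 y x = 2 * int d" using Suc.prems(4) by simp
  then have y0: "y \<in> F Q0" using Suc.IH[OF wf0] c xy by (simp add: Q0_def)
  have ia: "immediately_above (ballot Q0 v) x y" using xy unfolding immediately_above_def Q0_def by auto
  have "ballot Q = (ballot Q0)(v := swap_up (ballot Q0 v) x y)"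
    using bv xy by (auto simp: Q0_def swap_up_def fun_eq_iff)
  moreover have "card (cands Q0) = 2" using c xy by (simp add: Q0_def)
  ultimately show ?case using M[unfolded monotonicity_two_def, rule_format, of Q0 v x y Q] wf0 v ia y0
    by (simp add: Q0_def)
qed

lemma doubling_exists:
  assumes wf: "wf_profile P" and inf: "infinite (UNIV :: 'v set)"
  shows "\<exists>P2 :: ('v,'c) profile. wf_profile P2 \<and> doubling P P2 \<and> cands P2 = cands P \<and>
           (\<forall>a b. margin P2 a b = 2 * margin P a b)"
proof -
  define V where "V = voters P"
  have fin: "finite V" using wf wf_fin V_def by auto
  have "infinite (UNIV - V)" using fin inf by auto
  from infinite_arbitrarily_large[OF this, of "card V"]
  obtain W where W: "finite W" "card W = card V" "W \<subseteq> UNIV - V" by blast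
  from finite_same_card_bij[OF fin W(1) W(2)[symmetric]]
  obtain g where g: "bij_betw g V W" by blast
  have dj: "V \<inter> W = {}" using W by auto
  define f where "f j = (if j \<in> V then j else the_inv_into V g j)" for j
  define P2 where "P2 = \<lparr>voters = V \<union> W, cands = cands P,
      ballot = \<lambda>j. if j \<in> V \<union> W then ballot P (f j) else {}\<rparr>"
  have fW: "\<And>j. j \<in> W \<Longrightarrow> f j \<in> V" using dj bij_betwE[OF bij_betw_the_inv_into[OF g]]
    unfolding f_def by auto
  have fV: "\<And>j. j \<in> V \<Longrightarrow> f j = j" unfolding f_def by auto
  have wf2: "wf_profile P2"
    using wf fW fV fin W(1) unfolding P2_def wf_profile_def V_def[symmetric] by auto
  have img: "f ` (V \<union> W) = V"
  proof
    show "f ` (V \<union> W) \<subseteq> V" using fW fV by (auto simp del: f_def)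
    show "V \<subseteq> f ` (V \<union> W)"
    proof
      fix i assume "i \<in> V"
      then have "f i = i" "i \<in> V \<union> W" using fV by auto
      then show "i \<in> f ` (V \<union> W)" by (metis image_eqI)
    qed
  qed
  have ginj: "inj_on g V" using g by (simp add: bij_betw_def)
  have cnt: "card {j \<in> V \<union> W. f j = i} = 2" if i: "i \<in> V" for i
  proof -
    have gi: "g i \<in> W" using g i bij_betwE by blast
    have "g i \<notin> V" using gi dj by blast
    then have "f (g i) = the_inv_into V g (g i)" by (simp add: f_def)
    also have "\<dots> = i" using the_inv_into_f_f[OF ginj i] .
    finally have fgi: "f (g i) = i" .
    have jg: "j = g i" if j: "j \<in> W" "f j = i" for j
    proof -
      have "j \<notin> V" using j dj by blast
      then have "f j = the_inv_into V g j" by (simp add: f_def)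
      moreover have "g (the_inv_into V g j) = j" using g j by (intro f_the_inv_into_f) (auto simp: bij_betw_def)
      ultimately show ?thesis using j by simp
    qed
    have "{j \<in> V \<union> W. f j = i} = {i, g i}"
    proof (intro equalityI subsetI)
      fix j assume "j \<in> {j \<in> V \<union> W. f j = i}"
      then have "j \<in> V \<union> W" "f j = i" by auto
      then show "j \<in> {i, g i}" using jg fV by (metis UnE insert_iff)
    next
      fix j assume "j \<in> {i, g i}"
      then show "j \<in> {j \<in> V \<union> W. f j = i}" using i gi fgi fV by blast
    qed
    moreover have "i \<noteq> g i" using gi i dj by (metis IntI empty_iff)
    ultimately show ?thesis by simp
  qed
  have dbl: "doubling P P2"
    unfolding doubling_def using img cnt by (auto simp: P2_def V_def)
  have mg: "margin P2 a b = 2 * margin P a b" for a b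
  proof -
    have "margin P2 a b = (\<Sum>j\<in>V \<union> W. wt (ballot P (f j)) a b)"
      using margin_sum[of P2] fin W(1) by (simp add: P2_def)
    also have "\<dots> = (\<Sum>j\<in>V. wt (ballot P (f j)) a b) + (\<Sum>j\<in>W. wt (ballot P (f j)) a b)"
      using fin W(1) dj by (rule sum.union_disjoint)
    also have "(\<Sum>j\<in>W. wt (ballot P (f j)) a b) = (\<Sum>j\<in>V. wt (ballot P (f (g j))) a b)"
      using sum.reindex_bij_betw[OF g, of "\<lambda>j. wt (ballot P (f j)) a b"] by simp
    also have "\<dots> = (\<Sum>j\<in>V. wt (ballot P j) a b)"
      by (rule sum.cong) (use dj g in \<open>auto simp: f_def bij_betw_def the_inv_into_f_f\<close>)
    also have "(\<Sum>j\<in>V. wt (ballot P (f j)) a b) = (\<Sum>j\<in>V. wt (ballot P j) a b)"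
      using fV by simp
    finally show ?thesis using margin_sum[of P] fin V_def by simp
  qed
  show ?thesis using wf2 dbl mg by (auto simp: P2_def)
qed

lemma two_cand:
  assumes N: "neutrality F" and A: "anonymity F" and V: "VSCC F" and M: "monotonicity_two F"
    and U: "upward_homogeneity F" and inf: "infinite (UNIV :: 'v set)"
    and wf: "wf_profile (Q :: ('v,'c) profile)" and c: "cands Q = {x,y}" and xy: "x \<noteq> y"
    and m: "margin Q y x \<ge> 0"
  shows "y \<in> F Q"
proof -
  obtain Q2 where Q2: "wf_profile Q2" "doubling Q Q2" "cands Q2 = cands Q" "\<forall>a b. margin Q2 a b = 2 * margin Q a b"
    using doubling_exists[OF wf inf] by blast
  have "margin Q2 y x = 2 * int (nat (margin Q y x))" using Q2(4) m by simp
  then have "y \<in> F Q2" using even2[OF N A V M Q2(1), of x y "nat (margin Q y x)"] Q2(3) c xy by simp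
  then show ?thesis using U[unfolded upward_homogeneity_def] wf Q2 by blast
qed


lemma ps_ge:
  assumes "length cs \<ge> 2"
  shows "m \<le> path_strength P cs \<longleftrightarrow> (\<forall>k. Suc k < length cs \<longrightarrow> m \<le> margin P (cs!k) (cs!Suc k))"
proof -
  have eq: "{margin P (cs ! k) (cs ! Suc k) | k. Suc k < length cs} = (\<lambda>k. margin P (cs ! k) (cs ! Suc k)) ` {k. Suc k < length cs}"
    by blast
  have fin: "finite {k. Suc k < length cs}" by (rule finite_subset[of _ "{..<length cs}"]) auto
  have ne: "{k. Suc k < length cs} \<noteq> {}" using assms by (auto intro: exI[of _ 0])
  show ?thesis unfolding path_strength_def eq
    using Min_ge_iff[OF finite_imageI[OF fin] ] ne by auto
qed

lemma sc_defeat_alt: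
  "sc_defeat P x y \<longleftrightarrow> margin P x y > 0 \<and>
     (\<forall>cs. majority_path P cs y x \<longrightarrow> (\<exists>k. Suc k < length cs \<and> margin P (cs!k) (cs!Suc k) < margin P x y))"
  unfolding sc_defeat_def
proof (intro iffI conjI allI impI; (elim conjE)?)
  fix cs assume a: "0 < margin P x y" "\<forall>cs. majority_path P cs y x \<longrightarrow> path_strength P cs < margin P x y"
    "majority_path P cs y x"
  have ps: "path_strength P cs < margin P x y" using a by blast
  have l: "length cs \<ge> 2" using a(3) unfolding majority_path_def by blast
  show "\<exists>k. Suc k < length cs \<and> margin P (cs!k) (cs!Suc k) < margin P x y"
    using ps ps_ge[OF l, of "margin P x y" P] by (meson not_le)
next
  fix cs assume a: "0 < margin P x y" "\<forall>cs. majority_path P cs y x \<longrightarrow> (\<exists>k. Suc k < length cs \<and> margin P (cs!k) (cs!Suc k) < margin P x y)"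
    "majority_path P cs y x"
  have ps: "\<exists>k. Suc k < length cs \<and> margin P (cs!k) (cs!Suc k) < margin P x y" using a by blast
  have l: "length cs \<ge> 2" using a(3) unfolding majority_path_def by blast
  show "path_strength P cs < margin P x y"
    using ps ps_ge[OF l, of "margin P x y" P] by (meson not_le)
qed auto

lemma sc_scale:
  assumes c: "cands Q = cands P" and m: "\<And>a b. margin Q a b = c * margin P a b" and cp: "c > 0"
  shows "split_cycle Q = split_cycle P"
proof -
  have mp: "majority_path Q cs a b \<longleftrightarrow> majority_path P cs a b" for cs a b
    unfolding majority_path_def c m using cp by (simp add: zero_less_mult_iff)
  have "sc_defeat Q a b \<longleftrightarrow> sc_defeat P a b" for a b
    unfolding sc_defeat_alt mp unfolding m using cp by (simp add: zero_less_mult_iff)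
  then show ?thesis unfolding split_cycle_def c by simp
qed

lemma margin_le_card: "margin P a b \<le> int (card (voters P))" if "finite (voters P)"
proof -
  have "card {i \<in> voters P. (a, b) \<in> ballot P i} \<le> card (voters P)"
    using that by (intro card_mono) auto
  then show ?thesis unfolding margin_def by simp
qed

lemma slo_converse:
  assumes "strict_linear_order_on C L"
  shows "strict_linear_order_on C (converse L)"
  using assms unfolding strict_linear_order_on_def trans_def irrefl_on_def total_on_def by blast

lemma wt_converse: "wt (converse L) a b = - wt L a b"
  unfolding wt_def by simp

lemma add_pair:
  assumes wf: "wf_profile (P :: ('v,'c) profile)" and inf: "infinite (UNIV :: 'v set)"
    and NR: "neutral_reversal F" and y: "y \<in> cands P"
  shows "\<exists>P1 :: ('v,'c) profile. wf_profile P1 \<and> cands P1 = cands P \<and> F P1 = F P \<and>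
     (\<forall>a b. margin P1 a b = margin P a b) \<and>
     (\<forall>x\<in>cands P. x \<noteq> y \<longrightarrow> card {v \<in> voters P1. (y,x) \<in> ballot P1 v} \<ge> Suc (card {v \<in> voters P. (y,x) \<in> ballot P v}))"
proof -
  define V where "V = voters P"
  have fin: "finite V" using wf wf_fin V_def by auto
  obtain i where i: "i \<notin> V" using ex_new_if_finite[OF inf fin] by blast
  obtain j where j: "j \<notin> insert i V" using ex_new_if_finite[OF inf] fin by (metis finite_insert)
  obtain v0 where v0: "v0 \<in> V" using wf wf_fin V_def by blast
  define L where "L = ballot P v0"
  have Lslo: "strict_linear_order_on (cands P) L" and Lsub: "L \<subseteq> cands P \<times> cands P"
    using wf v0 unfolding wf_profile_def L_def V_def by auto
  define P1 where "P1 = \<lparr>voters = V \<union> {i, j}, cands = cands P, ballot = (ballot P)(i := L, j := converse L)\<rparr>"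
  have ij: "i \<noteq> j" using j by auto
  have wf1: "wf_profile P1"
    using wf fin Lslo Lsub slo_converse[OF Lslo] i j ij unfolding P1_def wf_profile_def V_def[symmetric]
    by (auto simp: converse_subset_swap)
  have bk: "\<forall>k\<in>voters P. ballot P1 k = ballot P k" using i j by (auto simp: P1_def V_def)
  have "wf_profile P \<and> wf_profile P1 \<and> i \<notin> voters P \<and> j \<notin> voters P \<and> i \<noteq> j \<and>
      voters P1 = voters P \<union> {i, j} \<and> cands P1 = cands P \<and>
      ballot P1 j = converse (ballot P1 i) \<and> (\<forall>k\<in>voters P. ballot P1 k = ballot P k)"
    using wf wf1 i j ij bk by (simp add: P1_def V_def)
  then have "F P1 = F P" using NR unfolding neutral_reversal_def by blast
  moreover have "margin P1 a b = margin P a b" for a b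
  proof -
    have "margin P1 a b = (\<Sum>v\<in>V \<union> {i,j}. wt (ballot P1 v) a b)"
      using margin_sum[of P1] fin by (simp add: P1_def)
    also have "\<dots> = (\<Sum>v\<in>V. wt (ballot P1 v) a b) + (\<Sum>v\<in>{i,j}. wt (ballot P1 v) a b)"
      by (rule sum.union_disjoint) (use fin i j in auto)
    also have "(\<Sum>v\<in>{i,j}. wt (ballot P1 v) a b) = 0"
      using ij by (simp add: P1_def wt_converse)
    also have "(\<Sum>v\<in>V. wt (ballot P1 v) a b) = (\<Sum>v\<in>V. wt (ballot P v) a b)"
      by (rule sum.cong) (use i j in \<open>auto simp: P1_def\<close>)
    finally show ?thesis using margin_sum[of P] fin V_def by simp
  qed
  moreover have "card {v \<in> voters P1. (y,x) \<in> ballot P1 v} \<ge> Suc (card {v \<in> voters P. (y,x) \<in> ballot P v})"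
    if x: "x \<in> cands P" "x \<noteq> y" for x
  proof -
    define S where "S = {v \<in> voters P. (y,x) \<in> ballot P v}"
    have "(y,x) \<in> L \<or> (y,x) \<in> converse L" using Lslo x y unfolding strict_linear_order_on_def total_on_def by auto
    moreover have "ballot P1 i = L" "ballot P1 j = converse L" using ij by (auto simp: P1_def)
    ultimately have "(y,x) \<in> ballot P1 i \<or> (y,x) \<in> ballot P1 j" by simp
    then obtain w where w: "w \<in> {i,j}" "(y,x) \<in> ballot P1 w" by blast
    have "insert w S \<subseteq> {v \<in> voters P1. (y,x) \<in> ballot P1 v}"
      using w i j unfolding S_def P1_def V_def by auto
    moreover have "w \<notin> S" using w i j unfolding S_def V_def by auto
    moreover have "finite S" using fin unfolding S_def V_def by auto
    moreover have "finite {v \<in> voters P1. (y,x) \<in> ballot P1 v}" using fin by (simp add: P1_def)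
    ultimately show ?thesis unfolding S_def[symmetric] by (metis card_insert_disjoint card_mono)
  qed
  ultimately show ?thesis using wf1 by (auto simp: P1_def)
qed

lemma add_pairs:
  assumes wf: "wf_profile (P :: ('v,'c) profile)" and inf: "infinite (UNIV :: 'v set)"
    and NR: "neutral_reversal F" and y: "y \<in> cands P"
  shows "\<exists>P1 :: ('v,'c) profile. wf_profile P1 \<and> cands P1 = cands P \<and> F P1 = F P \<and>
     (\<forall>a b. margin P1 a b = margin P a b) \<and>
     (\<forall>x\<in>cands P. x \<noteq> y \<longrightarrow> card {v \<in> voters P1. (y,x) \<in> ballot P1 v} \<ge> t)"
proof (induction t)
  case 0
  show ?case using wf by (intro exI[of _ P]) auto
next
  case (Suc t)
  then obtain P1 where P1: "wf_profile P1" "cands P1 = cands P" "F P1 = F P"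
     "\<forall>a b. margin P1 a b = margin P a b"
     "\<forall>x\<in>cands P. x \<noteq> y \<longrightarrow> card {v \<in> voters P1. (y,x) \<in> ballot P1 v} \<ge> t" by blast
  obtain P2 where P2: "wf_profile P2" "cands P2 = cands P1" "F P2 = F P1"
     "\<forall>a b. margin P2 a b = margin P1 a b"
     "\<forall>x\<in>cands P1. x \<noteq> y \<longrightarrow> card {v \<in> voters P2. (y,x) \<in> ballot P2 v} \<ge> Suc (card {v \<in> voters P1. (y,x) \<in> ballot P1 v})"
    using add_pair[OF P1(1) inf NR] y P1(2) by blast
  have c: "\<forall>x\<in>cands P. x \<noteq> y \<longrightarrow> card {v \<in> voters P2. (y,x) \<in> ballot P2 v} \<ge> Suc t"
  proof (intro ballI impI)
    fix x assume x: "x \<in> cands P" "x \<noteq> y"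
    have "t \<le> card {v \<in> voters P1. (y,x) \<in> ballot P1 v}" using P1(5) x by blast
    moreover have "Suc (card {v \<in> voters P1. (y,x) \<in> ballot P1 v}) \<le> card {v \<in> voters P2. (y,x) \<in> ballot P2 v}"
      using P2(5) P1(2) x by blast
    ultimately show "Suc t \<le> card {v \<in> voters P2. (y,x) \<in> ballot P2 v}" by linarith
  qed
  have "wf_profile P2 \<and> cands P2 = cands P \<and> F P2 = F P \<and> (\<forall>a b. margin P2 a b = margin P a b)"
    using P1(1-4) P2(1-4) by simp
  then show ?case using c by blast
qed

lemma restrict_simps[simp]: "voters (restrict P S) = voters P" "cands (restrict P S) = S"
  "ballot (restrict P S) v = ballot P v \<inter> (S \<times> S)"
  by (auto simp: restrict_def)

lemma restrict_coherent:
  assumes xS: "x \<in> S" and yS: "y \<in> S" and Sc: "S \<subseteq> cands P"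
  shows "coherent_step P x y (restrict P S)"
proof -
  have sub: "{x,y} \<times> {x,y} \<subseteq> S \<times> S" using xS yS by auto
  have rm: "\<And>a b. a \<in> S \<Longrightarrow> b \<in> S \<Longrightarrow> margin (restrict P S) a b = margin P a b"
    by (rule restrict_margin)
  have b: "\<forall>i\<in>voters P. ballot (restrict P S) i \<inter> ({x, y} \<times> {x, y}) = ballot P i \<inter> ({x, y} \<times> {x, y})"
    using sub by auto
  have m: "\<forall>a\<in>cands (restrict P S). \<forall>b\<in>cands (restrict P S). margin (restrict P S) a b > 0 \<longrightarrow>
        margin P a b > 0 \<and> margin (restrict P S) a b \<le> margin P a b \<and>
        ({a, b} = {x, y} \<longrightarrow> margin (restrict P S) a b = margin P a b)"
    using rm by simp
  show ?thesis unfolding coherent_step_def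
  proof (intro conjI)
    show "margin P x y > 0 \<longrightarrow> margin (restrict P S) x y = margin P x y" using rm[OF xS yS] by simp
    show "margin P y x > 0 \<longrightarrow> margin (restrict P S) y x = margin P y x" using rm[OF yS xS] by simp
  qed (use b m xS yS Sc in \<open>simp_all only: restrict_simps\<close>)
qed

lemma simple_succ:
  "successively R cs \<Longrightarrow> cs \<noteq> [] \<Longrightarrow>
   \<exists>ds. distinct ds \<and> successively R ds \<and> ds \<noteq> [] \<and> hd ds = hd cs \<and> last ds = last cs \<and> set ds \<subseteq> set cs"
proof (induction "length cs" arbitrary: cs rule: less_induct)
  case less
  show ?case
  proof (cases "distinct cs")
    case True
    then show ?thesis using less.prems by blast
  next
    case False
    then obtain xs ys zs w where cs: "cs = xs @ [w] @ ys @ [w] @ zs" using not_distinct_decomp by blast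
    define ds where "ds = xs @ [w] @ zs"
    have len: "length ds < length cs" unfolding ds_def cs by simp
    have s: "successively R ds" using less.prems(1) unfolding cs ds_def
      by (auto simp: successively_append_iff successively_Cons)
    have ne: "ds \<noteq> []" by (simp add: ds_def)
    have h: "hd ds = hd cs" unfolding ds_def cs by (cases xs) auto
    have l: "last ds = last cs" unfolding ds_def cs by (cases zs) auto
    have st: "set ds \<subseteq> set cs" unfolding ds_def cs by auto
    from less.hyps[OF len s ne] obtain es where "distinct es \<and> successively R es \<and> es \<noteq> [] \<and> hd es = hd ds \<and> last es = last ds \<and> set es \<subseteq> set ds"
      by blast
    then show ?thesis using h l st by (intro exI[of _ es]) auto
  qed
qed

definition remove_voters :: "('v,'c) profile \<Rightarrow> 'v set \<Rightarrow> ('v,'c) profile" where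
  "remove_voters Q W = Q\<lparr>voters := W, ballot := \<lambda>v. if v \<in> W then ballot Q v else {}\<rparr>"

lemma remove_voters_wf:
  "wf_profile Q \<Longrightarrow> W \<subseteq> voters Q \<Longrightarrow> W \<noteq> {} \<Longrightarrow> wf_profile (remove_voters Q W)"
  unfolding wf_profile_def remove_voters_def by (auto intro: finite_subset)

lemma remove_pairs:
  assumes NR: "neutral_reversal F" and finR: "finite R"
  shows "wf_profile Q \<Longrightarrow> voters Q = W \<union> R \<union> g ` R \<Longrightarrow> W \<noteq> {} \<Longrightarrow> W \<inter> R = {} \<Longrightarrow>
    W \<inter> g ` R = {} \<Longrightarrow> R \<inter> g ` R = {} \<Longrightarrow> inj_on g R \<Longrightarrow>
    (\<forall>r\<in>R. ballot Q (g r) = converse (ballot Q r)) \<Longrightarrow> F Q = F (remove_voters Q W)"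
  using finR
proof (induction R arbitrary: Q rule: finite_induct)
  case empty
  then have "remove_voters Q W = Q" unfolding remove_voters_def using wf_out[OF empty.prems(1)]
    by (cases Q) (auto simp: fun_eq_iff)
  then show ?case by simp
next
  case (insert r R0)
  define U where "U = W \<union> R0 \<union> g ` R0"
  define Q0 where "Q0 = remove_voters Q U"
  have U: "U \<subseteq> voters Q" "U \<noteq> {}" using insert.prems(2,3) unfolding U_def by auto
  have wf0: "wf_profile Q0" unfolding Q0_def by (rule remove_voters_wf[OF insert.prems(1) U])
  have ri: "r \<notin> U" using insert.hyps(2) insert.prems(4,6) insert.prems(7) unfolding U_def by auto
  have gi: "g r \<notin> U"
  proof -
    have "g r \<notin> W" using insert.prems(5) by auto
    moreover have "g r \<notin> R0" using insert.prems(6) by auto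
    moreover have "g r \<notin> g ` R0" using insert.prems(7) insert.hyps(2) by (auto simp: inj_on_def)
    ultimately show ?thesis unfolding U_def by auto
  qed
  have rg: "r \<noteq> g r" using insert.prems(6) by auto
  have vQ: "voters Q = U \<union> {r, g r}" using insert.prems(2) unfolding U_def by auto
  have "F Q = F Q0"
    using NR[unfolded neutral_reversal_def, rule_format, of Q0 Q r "g r"] wf0 insert.prems(1,8) ri gi rg vQ
    by (auto simp: Q0_def remove_voters_def)
  moreover have "F Q0 = F (remove_voters Q0 W)"
  proof (rule insert.IH[OF wf0])
    show "voters Q0 = W \<union> R0 \<union> g ` R0" by (simp add: Q0_def remove_voters_def U_def)
    show "\<forall>r\<in>R0. ballot Q0 (g r) = converse (ballot Q0 r)"
      using insert.prems(8) by (auto simp: Q0_def remove_voters_def U_def)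
  qed (use insert.prems in auto)
  moreover have "remove_voters Q0 W = remove_voters Q W"
    unfolding Q0_def remove_voters_def U_def by (auto simp: fun_eq_iff)
  ultimately show ?case by simp
qed


definition sk :: "nat \<Rightarrow> nat \<Rightarrow> nat" where "sk k p = (if Suc p = k then 0 else Suc p)"
definition off :: "nat \<Rightarrow> nat \<Rightarrow> nat \<Rightarrow> nat" where "off k i p = (if i \<le> p then p - i else p + k - i)"
definition rk :: "nat \<Rightarrow> nat \<Rightarrow> nat \<Rightarrow> nat" where
  "rk k t d = (if t = 0 then d else if d = 0 then k - 2 else if d = 1 then k - 1 else k - 1 - d)"

definition bal_of :: "'c list \<Rightarrow> (nat \<Rightarrow> nat) \<Rightarrow> 'c rel" where
  "bal_of cs r = {(cs!p, cs!q) | p q. p < length cs \<and> q < length cs \<and> r p < r q}"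

definition cb :: "'c list \<Rightarrow> nat \<Rightarrow> nat \<Rightarrow> 'c rel" where
  "cb cs t i = bal_of cs (\<lambda>p. rk (length cs) t (off (length cs) i p))"

lemma wt_irrefl: "(a,a) \<notin> R \<Longrightarrow> wt R a a = 0" unfolding wt_def by simp

locale cyc =
  fixes cs :: "'c list"
  assumes dist: "distinct cs" and len: "3 \<le> length cs"
begin

abbreviation "k \<equiv> length cs"

lemma nth_eq_iff: "p < k \<Longrightarrow> q < k \<Longrightarrow> cs!p = cs!q \<longleftrightarrow> p = q"
  using dist by (simp add: nth_eq_iff_index_eq)

lemma bal_of_mem: "p < k \<Longrightarrow> q < k \<Longrightarrow> (cs!p, cs!q) \<in> bal_of cs r \<longleftrightarrow> r p < r q"
  unfolding bal_of_def using nth_eq_iff by auto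

lemma bal_of_sub: "bal_of cs r \<subseteq> set cs \<times> set cs"
  unfolding bal_of_def by auto

lemma set_nth: "a \<in> set cs \<Longrightarrow> \<exists>p<k. a = cs!p"
  by (metis in_set_conv_nth)

lemma bal_of_slo:
  assumes inj: "inj_on r {..<k}"
  shows "strict_linear_order_on (set cs) (bal_of cs r)"
  unfolding strict_linear_order_on_def
proof (intro conjI)
  show "trans (bal_of cs r)"
  proof (rule transI)
    fix a b c assume ab: "(a,b) \<in> bal_of cs r" and bc: "(b,c) \<in> bal_of cs r"
    from ab obtain p q where pq: "a = cs!p" "b = cs!q" "p<k" "q<k" "r p < r q" unfolding bal_of_def by blast
    from bc obtain q' s where qs: "b = cs!q'" "c = cs!s" "q'<k" "s<k" "r q' < r s" unfolding bal_of_def by blast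
    have "q = q'" using pq qs nth_eq_iff by metis
    then show "(a,c) \<in> bal_of cs r" using pq qs bal_of_mem by auto
  qed
  show "irrefl (bal_of cs r)"
    unfolding irrefl_on_def
  proof (intro ballI notI)
    fix a assume "(a,a) \<in> bal_of cs r"
    then obtain p q where pq: "a = cs!p" "a = cs!q" "p<k" "q<k" "r p < r q" unfolding bal_of_def by blast
    then have "p = q" using nth_eq_iff by metis
    then show False using pq by simp
  qed
  show "total_on (set cs) (bal_of cs r)"
    unfolding total_on_def
  proof (intro ballI impI)
    fix a b assume a: "a \<in> set cs" and b: "b \<in> set cs" and ab: "a \<noteq> b"
    obtain p where p: "p < k" "a = cs!p" using set_nth[OF a] by blast
    obtain q where q: "q < k" "b = cs!q" using set_nth[OF b] by blast
    have "p \<noteq> q" using ab p q by auto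
    then have "r p \<noteq> r q" using inj p q unfolding inj_on_def by auto
    then show "(a,b) \<in> bal_of cs r \<or> (b,a) \<in> bal_of cs r" using p q bal_of_mem by (auto simp: linorder_neq_iff)
  qed
qed

lemma wt_bal_of:
  assumes "p < k" "q < k" "p \<noteq> q" "inj_on r {..<k}"
  shows "wt (bal_of cs r) (cs!p) (cs!q) = (if r p < r q then 1 else -1)"
proof -
  have "r p \<noteq> r q" using assms unfolding inj_on_def by auto
  then show ?thesis unfolding wt_def using bal_of_mem assms by auto
qed

lemma off_lt: "i < k \<Longrightarrow> p < k \<Longrightarrow> off k i p < k"
  unfolding off_def by auto

lemma off_inj: "i < k \<Longrightarrow> inj_on (off k i) {..<k}"
  unfolding inj_on_def off_def by auto

lemma rk_inj: "inj_on (rk k t) {..<k}"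
  using len unfolding inj_on_def rk_def by auto

lemma rk_off_inj: "i < k \<Longrightarrow> inj_on (\<lambda>p. rk k t (off k i p)) {..<k}"
proof -
  assume i: "i < k"
  have "inj_on (rk k t \<circ> off k i) {..<k}"
    using off_inj[OF i] rk_inj off_lt[OF i] by (intro comp_inj_on) (auto intro: inj_on_subset)
  then show ?thesis by (simp add: comp_def)
qed

lemma cb_slo: "i < k \<Longrightarrow> strict_linear_order_on (set cs) (cb cs t i)"
  unfolding cb_def by (rule bal_of_slo[OF rk_off_inj])

lemma cb_sub: "cb cs t i \<subseteq> set cs \<times> set cs"
  unfolding cb_def by (rule bal_of_sub)

lemma off_zero: "i < k \<Longrightarrow> p < k \<Longrightarrow> off k i p = 0 \<longleftrightarrow> p = i"
  unfolding off_def by auto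

lemma off_one: "i < k \<Longrightarrow> p < k \<Longrightarrow> off k i p = 1 \<longleftrightarrow> p = sk k i"
  using len unfolding off_def sk_def by auto

lemma rk_pair:
  assumes "dp < k" "dq < k" "dp \<noteq> dq"
  shows "(if rk k 0 dp < rk k 0 dq then 1 else -1) + (if rk k 1 dp < rk k 1 dq then 1 else -1) =
    (if dp = 0 \<and> dq = 1 then 2 else if dp = 1 \<and> dq = 0 then -2 else (0::int))"
  using assms len unfolding rk_def by auto

lemma wt_cb_pair:
  assumes p: "p < k" and q: "q < k" and pq: "p \<noteq> q" and i: "i < k"
  shows "wt (cb cs 0 i) (cs!p) (cs!q) + wt (cb cs 1 i) (cs!p) (cs!q) =
    (if p = i \<and> q = sk k i then 2 else if q = i \<and> p = sk k i then -2 else 0)"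
proof -
  have d: "off k i p \<noteq> off k i q" using off_inj[OF i] p q pq unfolding inj_on_def by auto
  have "wt (cb cs 0 i) (cs!p) (cs!q) + wt (cb cs 1 i) (cs!p) (cs!q) =
     (if rk k 0 (off k i p) < rk k 0 (off k i q) then 1 else -1) + (if rk k 1 (off k i p) < rk k 1 (off k i q) then 1 else -1)"
    unfolding cb_def using wt_bal_of[OF p q pq rk_off_inj[OF i]] by simp
  also have "\<dots> = (if off k i p = 0 \<and> off k i q = 1 then 2 else if off k i p = 1 \<and> off k i q = 0 then -2 else 0)"
    by (rule rk_pair[OF off_lt[OF i p] off_lt[OF i q] d])
  also have "\<dots> = (if p = i \<and> q = sk k i then 2 else if q = i \<and> p = sk k i then -2 else 0)"
    using off_zero[OF i p] off_zero[OF i q] off_one[OF i p] off_one[OF i q] by auto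
  finally show ?thesis .
qed

lemma sum_cb_pairs:
  assumes p: "p < k" and q: "q < k" and pq: "p \<noteq> q"
  shows "(\<Sum>i<k. wt (cb cs 0 i) (cs!p) (cs!q) + wt (cb cs 1 i) (cs!p) (cs!q)) =
    (if q = sk k p then 2 else 0) - (if p = sk k q then 2 else 0)"
proof -
  have "(\<Sum>i<k. wt (cb cs 0 i) (cs!p) (cs!q) + wt (cb cs 1 i) (cs!p) (cs!q)) =
        (\<Sum>i<k. (if i = p then (if q = sk k p then 2 else 0) else 0) - (if i = q then (if p = sk k q then 2 else 0) else 0))"
  proof (rule sum.cong[OF refl])
    fix i assume "i \<in> {..<k}"
    then have i: "i < k" by simp
    show "wt (cb cs 0 i) (cs!p) (cs!q) + wt (cb cs 1 i) (cs!p) (cs!q) =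
      (if i = p then (if q = sk k p then 2 else 0) else 0) - (if i = q then (if p = sk k q then 2 else 0) else 0)"
      unfolding wt_cb_pair[OF p q pq i] using pq by auto
  qed
  also have "\<dots> = (if q = sk k p then 2 else 0) - (if p = sk k q then 2 else 0)"
    using p q by (simp add: sum_subtractf)
  finally show ?thesis .
qed

definition \<pi> :: "'c \<Rightarrow> 'c" where "\<pi> a = cs ! sk k (the_inv_into {..<k} (nth cs) a)"

lemma nth_inj: "inj_on (nth cs) {..<k}"
  using dist by (intro inj_on_nth) auto

lemma sk_lt: "p < k \<Longrightarrow> sk k p < k"
  unfolding sk_def by auto

lemma pi_nth: "p < k \<Longrightarrow> \<pi> (cs!p) = cs!(sk k p)"
  unfolding \<pi>_def using the_inv_into_f_f[OF nth_inj] by simp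

lemma pi_bij: "bij_betw \<pi> (set cs) (set cs)"
proof -
  have inj: "inj_on \<pi> (set cs)"
  proof (rule inj_onI)
    fix a b assume a: "a \<in> set cs" and b: "b \<in> set cs" and e: "\<pi> a = \<pi> b"
    obtain p where p: "p < k" "a = cs!p" using set_nth[OF a] by blast
    obtain q where q: "q < k" "b = cs!q" using set_nth[OF b] by blast
    have "cs!(sk k p) = cs!(sk k q)" using e p q pi_nth by simp
    then have "sk k p = sk k q" using nth_eq_iff sk_lt p q by blast
    then have "p = q" using p q unfolding sk_def by (auto split: if_splits)
    then show "a = b" using p q by simp
  qed
  have sub: "\<pi> ` set cs \<subseteq> set cs"
  proof
    fix b assume "b \<in> \<pi> ` set cs"
    then obtain a where a: "a \<in> set cs" "b = \<pi> a" by blast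
    obtain p where p: "p < k" "a = cs!p" using set_nth[OF a(1)] by blast
    show "b \<in> set cs" using a p pi_nth sk_lt by simp
  qed
  have "\<pi> ` set cs = set cs" using endo_inj_surj[OF _ sub inj] by simp
  then show ?thesis using inj by (simp add: bij_betw_def)
qed

lemma off_sk: "i < k \<Longrightarrow> p < k \<Longrightarrow> off k (sk k i) (sk k p) = off k i p"
  unfolding off_def sk_def by auto

definition pk :: "nat \<Rightarrow> nat" where "pk p = (if p = 0 then k - 1 else p - 1)"

lemma sk_pk: "p < k \<Longrightarrow> sk k (pk p) = p" "p < k \<Longrightarrow> pk p < k"
  unfolding sk_def pk_def by auto

lemma cb_rot:
  assumes i: "i < k"
  shows "img \<pi> (cb cs t i) = cb cs t (sk k i)"
proof (intro equalityI subsetI)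
  fix z assume "z \<in> img \<pi> (cb cs t i)"
  then obtain p q where pq: "p < k" "q < k" "rk k t (off k i p) < rk k t (off k i q)"
    "z = (\<pi> (cs!p), \<pi> (cs!q))"
    unfolding img_def cb_def bal_of_def by auto
  then have "z = (cs!(sk k p), cs!(sk k q))" using pi_nth by simp
  moreover have "rk k t (off k (sk k i) (sk k p)) < rk k t (off k (sk k i) (sk k q))"
    using pq off_sk[OF i] by simp
  ultimately show "z \<in> cb cs t (sk k i)" unfolding cb_def bal_of_def using sk_lt pq by blast
next
  fix z assume "z \<in> cb cs t (sk k i)"
  then obtain p q where pq: "p < k" "q < k" "rk k t (off k (sk k i) p) < rk k t (off k (sk k i) q)"
    "z = (cs!p, cs!q)"
    unfolding cb_def bal_of_def by auto
  define p' where "p' = pk p"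
  define q' where "q' = pk q"
  have pp: "p' < k" "sk k p' = p" "q' < k" "sk k q' = q" using sk_pk pq unfolding p'_def q'_def by auto
  have "rk k t (off k i p') < rk k t (off k i q')" using pq(3) off_sk[OF i pp(1)] off_sk[OF i pp(3)] pp by simp
  then have "(cs!p', cs!q') \<in> cb cs t i" unfolding cb_def bal_of_def using pp by blast
  moreover have "z = (\<pi> (cs!p'), \<pi> (cs!q'))" using pq pp pi_nth by simp
  ultimately show "z \<in> img \<pi> (cb cs t i)" unfolding img_def by force
qed

end


lemma wt_sum_card:
  assumes "finite J"
  shows "(\<Sum>j\<in>J. wt (f j) a b) = int (card {j\<in>J. (a,b) \<in> f j}) - int (card {j\<in>J. (b,a) \<in> f j})"
  unfolding wt_def card_int_sum[OF assms] by (simp add: sum_subtractf)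

lemma sum_prod_snd:
  assumes "finite A" "finite X"
  shows "(\<Sum>j\<in>A \<times> X. (\<phi> (snd j) :: int)) = int (card A) * (\<Sum>z\<in>X. \<phi> z)"
proof -
  have "(\<Sum>j\<in>A \<times> X. \<phi> (snd j)) = (\<Sum>j\<in>A \<times> X. case_prod (\<lambda>s z. \<phi> z) j)"
    by (rule sum.cong) auto
  also have "\<dots> = (\<Sum>s\<in>A. \<Sum>z\<in>X. \<phi> z)" by (rule sum.cartesian_product[symmetric])
  also have "\<dots> = int (card A) * (\<Sum>z\<in>X. \<phi> z)" by simp
  finally show ?thesis .
qed

lemma sum_prod_pair:
  "(\<Sum>z\<in>B \<times> C. (\<psi> (fst z) (snd z) :: int)) = (\<Sum>t\<in>B. \<Sum>i\<in>C. \<psi> t i)"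
proof -
  have "(\<Sum>z\<in>B \<times> C. \<psi> (fst z) (snd z)) = (\<Sum>z\<in>B \<times> C. case_prod \<psi> z)"
    by (rule sum.cong) auto
  also have "\<dots> = (\<Sum>t\<in>B. \<Sum>i\<in>C. \<psi> t i)" by (rule sum.cartesian_product[symmetric])
  finally show ?thesis .
qed

lemma slo_restr_eq:
  assumes "strict_linear_order_on S1 R1" "strict_linear_order_on S2 R2"
    "x \<in> S1" "y \<in> S1" "x \<in> S2" "y \<in> S2" "x \<noteq> y" "(x,y) \<in> R1 \<longleftrightarrow> (x,y) \<in> R2"
  shows "R1 \<inter> ({x,y} \<times> {x,y}) = R2 \<inter> ({x,y} \<times> {x,y})"
proof -
  have i: "(x,x) \<notin> R1" "(y,y) \<notin> R1" "(x,x) \<notin> R2" "(y,y) \<notin> R2"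
    using assms(1,2) unfolding strict_linear_order_on_def irrefl_on_def by auto
  have a1: "(y,x) \<in> R1 \<longleftrightarrow> (x,y) \<notin> R1"
    using assms(1,3,4,7) slo_asym unfolding strict_linear_order_on_def total_on_def by metis
  have a2: "(y,x) \<in> R2 \<longleftrightarrow> (x,y) \<notin> R2"
    using assms(2,5,6,7) slo_asym unfolding strict_linear_order_on_def total_on_def by metis
  show ?thesis
  proof (intro equalityI subsetI)
    fix z assume z: "z \<in> R1 \<inter> ({x,y} \<times> {x,y})"
    then obtain a b where ab: "z = (a,b)" "a \<in> {x,y}" "b \<in> {x,y}" by blast
    show "z \<in> R2 \<inter> ({x,y} \<times> {x,y})" using z ab i a1 a2 assms(8) by auto
  next
    fix z assume z: "z \<in> R2 \<inter> ({x,y} \<times> {x,y})"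
    then obtain a b where ab: "z = (a,b)" "a \<in> {x,y}" "b \<in> {x,y}" by blast
    show "z \<in> R1 \<inter> ({x,y} \<times> {x,y})" using z ab i a1 a2 assms(8) by auto
  qed
qed

context cyc
begin

definition cbj :: "nat \<times> nat \<times> nat \<Rightarrow> 'c rel" where "cbj j = cb cs (fst (snd j)) (snd (snd j))"

definition JJ :: "nat \<Rightarrow> (nat \<times> nat \<times> nat) set" where "JJ m = {..<m} \<times> {..<2} \<times> {..<k}"

lemma JJ_fin: "finite (JJ m)" unfolding JJ_def by auto

lemma JJ_i: "j \<in> JJ m \<Longrightarrow> snd (snd j) < k" unfolding JJ_def by auto

lemma cbj_slo: "j \<in> JJ m \<Longrightarrow> strict_linear_order_on (set cs) (cbj j)"
  unfolding cbj_def using cb_slo JJ_i by blast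

lemma cbj_sub: "cbj j \<subseteq> set cs \<times> set cs"
  unfolding cbj_def by (rule cb_sub)

lemma core_sum:
  "(\<Sum>j\<in>JJ m. wt (cbj j) a b) = int m * (\<Sum>i<k. wt (cb cs 0 i) a b + wt (cb cs 1 i) a b)"
proof -
  have "(\<Sum>j\<in>JJ m. wt (cbj j) a b) = (\<Sum>j\<in>{..<m} \<times> ({..<2} \<times> {..<k}). (\<lambda>z. wt (cb cs (fst z) (snd z)) a b) (snd j))"
    unfolding JJ_def cbj_def by simp
  also have "\<dots> = int m * (\<Sum>z\<in>{..<2} \<times> {..<k}. wt (cb cs (fst z) (snd z)) a b)"
    by (subst sum_prod_snd) auto
  also have "(\<Sum>z\<in>{..<2} \<times> {..<k}. wt (cb cs (fst z) (snd z)) a b) = (\<Sum>t\<in>{..<2::nat}. \<Sum>i<k. wt (cb cs t i) a b)"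
    by (rule sum_prod_pair)
  also have "\<dots> = (\<Sum>i<k. wt (cb cs 0 i) a b) + (\<Sum>i<k. wt (cb cs 1 i) a b)"
    by (simp add: numeral_2_eq_2 lessThan_Suc)
  also have "\<dots> = (\<Sum>i<k. wt (cb cs 0 i) a b + wt (cb cs 1 i) a b)"
    by (simp add: sum.distrib)
  finally show ?thesis .
qed

lemma core_val:
  assumes p: "p < k" and q: "q < k"
  shows "(\<Sum>j\<in>JJ m. wt (cbj j) (cs!p) (cs!q)) =
    (if p = q then 0 else int m * ((if q = sk k p then 2 else 0) - (if p = sk k q then 2 else 0)))"
proof (cases "p = q")
  case True
  have "wt (cbj j) (cs!p) (cs!q) = 0" if "j \<in> JJ m" for j
    using cbj_slo[OF that] True unfolding strict_linear_order_on_def irrefl_on_def wt_def by auto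
  then show ?thesis using True by simp
next
  case False
  then show ?thesis unfolding core_sum using sum_cb_pairs[OF p q False] by simp
qed

lemma card_JJ: "card (JJ m) = m * (2 * k)"
  unfolding JJ_def by (simp add: card_cartesian_product)

definition rot :: "nat \<times> nat \<times> nat \<Rightarrow> nat \<times> nat \<times> nat" where
  "rot j = (fst j, fst (snd j), sk k (snd (snd j)))"

lemma rot_bij: "bij_betw rot (JJ m) (JJ m)"
proof -
  have inj: "inj_on rot (JJ m)"
  proof (rule inj_onI)
    fix a b assume a: "a \<in> JJ m" and b: "b \<in> JJ m" and e: "rot a = rot b"
    have "sk k (snd (snd a)) = sk k (snd (snd b))" using e unfolding rot_def by simp
    then have "snd (snd a) = snd (snd b)" using JJ_i[OF a] JJ_i[OF b] unfolding sk_def by (auto split: if_splits)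
    then show "a = b" using e unfolding rot_def by (simp add: prod_eq_iff)
  qed
  have sub: "rot ` JJ m \<subseteq> JJ m" unfolding JJ_def rot_def using sk_lt by auto
  show ?thesis using endo_inj_surj[OF JJ_fin sub inj] inj by (simp add: bij_betw_def)
qed

lemma cbj_rot: "j \<in> JJ m \<Longrightarrow> cbj (rot j) = img \<pi> (cbj j)"
  unfolding cbj_def rot_def using cb_rot JJ_i by simp

lemma sk_mod: "sk k (r mod k) = Suc r mod k"
  unfolding sk_def using len by (simp add: mod_Suc)

end


lemma slo_pair:
  assumes "strict_linear_order_on S R" "x \<in> S" "y \<in> S" "x \<noteq> y"
  shows "(x,y) \<in> R \<longleftrightarrow> (y,x) \<notin> R"
  using assms slo_asym unfolding strict_linear_order_on_def total_on_def by metis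

context cyc
begin

lemma core_sym:
  assumes N: "neutrality F" and A: "anonymity F" and VS: "VSCC F"
    and wf: "wf_profile Q" and vQ: "voters Q = W" and cQ: "cands Q = set cs"
    and h: "bij_betw h (JJ m) W" and bQ: "\<And>j. j \<in> JJ m \<Longrightarrow> ballot Q (h j) = cbj j"
  shows "cs!0 \<in> F Q"
proof -
  define \<sigma> where "\<sigma> = h \<circ> (rot \<circ> the_inv_into (JJ m) h)"
  have sig: "bij_betw \<sigma> W W"
    unfolding \<sigma>_def by (rule bij_betw_trans[OF bij_betw_trans[OF bij_betw_the_inv_into[OF h] rot_bij] h])
  have bal: "ballot Q (\<sigma> v) = img \<pi> (ballot Q v)" if v: "v \<in> W" for v
  proof -
    obtain j where j: "j \<in> JJ m" "v = h j" using v h by (auto simp: bij_betw_def)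
    have inv: "the_inv_into (JJ m) h v = j" using j h by (simp add: bij_betw_def the_inv_into_f_f)
    have rj: "rot j \<in> JJ m" using rot_bij j(1) bij_betwE by blast
    have "ballot Q (\<sigma> v) = ballot Q (h (rot j))" by (simp add: \<sigma>_def inv)
    also have "\<dots> = cbj (rot j)" using bQ[OF rj] .
    also have "\<dots> = img \<pi> (cbj j)" using cbj_rot[OF j(1)] .
    also have "\<dots> = img \<pi> (ballot Q v)" using bQ[OF j(1)] j(2) by simp
    finally show ?thesis .
  qed
  have pi': "bij_betw \<pi> (cands Q) (cands Q)" using pi_bij cQ by simp
  have sig': "bij_betw \<sigma> (voters Q) (voters Q)" using sig vQ by simp
  have bal': "\<And>v. v \<in> voters Q \<Longrightarrow> ballot Q (\<sigma> v) = img \<pi> (ballot Q v)" using bal vQ by simp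
  have key: "a \<in> F Q \<longleftrightarrow> \<pi> a \<in> F Q" if "a \<in> set cs" for a
    using sym_lemma[OF N A wf pi' sig' bal'] that cQ by simp
  obtain a0 where a0: "a0 \<in> F Q" using VSCC_D(1)[OF VS wf] by blast
  then have "a0 \<in> set cs" using VSCC_D(2)[OF VS wf] cQ by blast
  then obtain p where p: "p < k" "a0 = cs!p" using set_nth by blast
  have step: "cs!((p + n) mod k) \<in> F Q" for n
  proof (induction n)
    case 0 then show ?case using p a0 by simp
  next
    case (Suc n)
    have k0: "0 < k" using len by linarith
    have lt: "(p + n) mod k < k" using k0 by (rule mod_less_divisor)
    have "\<pi> (cs!((p + n) mod k)) \<in> F Q" using key[of "cs!((p+n) mod k)"] Suc lt by simp
    moreover have "\<pi> (cs!((p + n) mod k)) = cs!((p + Suc n) mod k)" using pi_nth[OF lt] sk_mod by simp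
    ultimately show ?case by simp
  qed
  have "(p + (k - p)) mod k = 0" using p by simp
  then show ?thesis using step[of "k - p"] by simp
qed

end


context cyc
begin

lemma cycle_step:
  assumes N: "neutrality F" and A: "anonymity F" and NR: "neutral_reversal F" and VS: "VSCC F"
    and wf: "wf_profile P" and csP: "set cs \<subseteq> cands P"
    and xd: "x = cs!(k-1)" and yd: "y = cs!0"
    and path: "\<And>i. Suc i < k \<Longrightarrow> margin P x y \<le> margin P (cs!i) (cs!Suc i)"
    and mxy: "margin P x y = 2 * int m" and mpos: "0 < m"
    and cnt: "int m * int (k - 1) \<le> int (card {v \<in> voters P. (y,x) \<in> ballot P v})"
  shows "\<exists>P'. wf_profile P' \<and> coherent_step P x y P' \<and> y \<in> F P'"
proof -
  define V where "V = voters P"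
  have finV: "finite V" and Vne: "V \<noteq> {}" using wf wf_fin V_def by auto
  have k1: "k - 1 < k" "0 < k" using len by auto
  have "k - 1 \<noteq> 0" using len by linarith
  then have "cs!(k-1) \<noteq> cs!0" using nth_eq_iff[OF k1(1) k1(2)] by metis
  then have xy: "x \<noteq> y" using xd yd by simp
  have xs: "x \<in> set cs" "y \<in> set cs" using xd yd k1 by auto
  have xP: "x \<in> cands P" "y \<in> cands P" using xs csP by auto
  define A' where "A' = {v\<in>V. (x,y) \<in> ballot P v}"
  define B where "B = {v\<in>V. (y,x) \<in> ballot P v}"
  have finAB: "finite A'" "finite B" using finV by (auto simp: A'_def B_def)
  have pairP: "(x,y) \<in> ballot P v \<longleftrightarrow> (y,x) \<notin> ballot P v" if "v \<in> V" for v
    using ballot_pair[OF wf _ xP xy] that V_def by blast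
  have ABd: "A' \<inter> B = {}" using pairP by (auto simp: A'_def B_def)
  have ABu: "V = A' \<union> B" using pairP by (auto simp: A'_def B_def)
  have AV: "A' \<subseteq> V" "B \<subseteq> V" by (auto simp: A'_def B_def)
  have cAB: "int (card A') = int (card B) + 2 * int m" using mxy unfolding margin_def A'_def B_def V_def by simp
  define J where "J = JJ m"
  have finJ: "finite J" unfolding J_def by (rule JJ_fin)
  define JA where "JA = {j\<in>J. (x,y) \<in> cbj j}"
  define JB where "JB = {j\<in>J. (y,x) \<in> cbj j}"
  have pairJ: "(x,y) \<in> cbj j \<longleftrightarrow> (y,x) \<notin> cbj j" if "j \<in> J" for j
    using slo_pair[OF cbj_slo xs xy] that J_def by blast
  have JABd: "JA \<inter> JB = {}" using pairJ by (auto simp: JA_def JB_def)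
  have JABu: "J = JA \<union> JB" using pairJ by (auto simp: JA_def JB_def)
  have finJAB: "finite JA" "finite JB" using finJ by (auto simp: JA_def JB_def)
  have s2: "(\<Sum>j\<in>J. wt (cbj j) x y) = 2 * int m"
  proof -
    have "sk k (k-1) = 0" "sk k 0 \<noteq> k - 1" "k - 1 \<noteq> 0" using len unfolding sk_def by auto
    then show ?thesis unfolding J_def xd yd using core_val[OF k1(1) k1(2), of m] by simp
  qed
  have cJ1: "int (card JA) - int (card JB) = 2 * int m"
    using wt_sum_card[OF finJ, of cbj x y] s2 by (simp add: JA_def JB_def)
  have cJ: "card J = m * (2 * k)" unfolding J_def by (rule card_JJ)
  have "card J = card JA + card JB" using card_Un_disjoint[OF finJAB JABd] JABu by simp
  then have cJ2: "card JA + card JB = m * (2 * k)" using cJ by linarith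
  have cJ2': "int (card JA) + int (card JB) = 2 * (int m * int k)"
    using arg_cong[OF cJ2, of int] by simp
  have km: "int (k - 1) = int k - 1" using len by simp
  have cJB: "int (card JB) = int m * int (k - 1)"
    using cJ1 cJ2' unfolding km by (simp add: right_diff_distrib)
  have JBle: "card JB \<le> card B" using cJB cnt unfolding B_def V_def by simp
  have JAle: "card JA \<le> card A'" using cJ1 cAB JBle by linarith
  obtain A0 where A0: "A0 \<subseteq> A'" "card A0 = card JA" "finite A0"
    using obtain_subset_with_card_n[OF JAle] by metis
  obtain B0 where B0: "B0 \<subseteq> B" "card B0 = card JB" "finite B0"
    using obtain_subset_with_card_n[OF JBle] by metis
  obtain hA where hA: "bij_betw hA JA A0" using finite_same_card_bij[OF finJAB(1) A0(3)] A0(2) by metis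
  obtain hB where hB: "bij_betw hB JB B0" using finite_same_card_bij[OF finJAB(2) B0(3)] B0(2) by metis
  define R where "R = A' - A0"
  define R' where "R' = B - B0"
  have finR: "finite R" "finite R'" using finAB by (auto simp: R_def R'_def)
  have cR: "card R = card R'"
  proof -
    have "card R = card A' - card A0" unfolding R_def using card_Diff_subset[OF A0(3) A0(1)] .
    moreover have "card R' = card B - card B0" unfolding R'_def using card_Diff_subset[OF B0(3) B0(1)] .
    ultimately show ?thesis using A0(2) B0(2) cJ1 cAB by linarith
  qed
  obtain g where g: "bij_betw g R R'" using finite_same_card_bij[OF finR cR] by metis
  define W where "W = A0 \<union> B0"
  define h where "h j = (if j \<in> JA then hA j else hB j)" for j
  have hbij: "bij_betw h J W"
  proof -
    have "bij_betw h JA A0 = bij_betw hA JA A0" by (rule bij_betw_cong) (simp add: h_def)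
    then have 1: "bij_betw h JA A0" using hA by simp
    have "bij_betw h JB B0 = bij_betw hB JB B0" by (rule bij_betw_cong) (use JABd in \<open>auto simp: h_def\<close>)
    then have 2: "bij_betw h JB B0" using hB by simp
    have "A0 \<inter> B0 = {}" using A0(1) B0(1) ABd by blast
    then have "bij_betw h (JA \<union> JB) (A0 \<union> B0)" by (rule bij_betw_combine[OF 1 2])
    then show ?thesis using JABu W_def by simp
  qed
  define Lx where "Lx = bal_of cs (\<lambda>p. k - 1 - p)"
  have Lx_slo: "strict_linear_order_on (set cs) Lx" unfolding Lx_def
    by (rule bal_of_slo) (auto simp: inj_on_def)
  have Lx_sub: "Lx \<subseteq> set cs \<times> set cs" unfolding Lx_def by (rule bal_of_sub)
  have Lxy: "(x,y) \<in> Lx" unfolding Lx_def xd yd using bal_of_mem[OF k1(1) k1(2)] len by simp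
  have Lyx: "(y,x) \<notin> Lx" using slo_pair[OF Lx_slo xs xy] Lxy by blast
  define bal where "bal v = (if v \<in> W then cbj (the_inv_into J h v) else if v \<in> R then Lx
      else if v \<in> R' then converse Lx else {})" for v
  define P' where "P' = \<lparr>voters = V, cands = set cs, ballot = bal\<rparr>"
  have WV: "W \<subseteq> V" "R \<subseteq> V" "R' \<subseteq> V" using A0(1) B0(1) AV unfolding W_def R_def R'_def by auto
  have Vu: "V = W \<union> R \<union> R'" using A0(1) B0(1) ABu unfolding W_def R_def R'_def by auto
  have dWR: "W \<inter> R = {}" "W \<inter> R' = {}" "R \<inter> R' = {}"
    using A0(1) B0(1) ABd unfolding W_def R_def R'_def by auto
  have invh: "the_inv_into J h (h j) = j" if "j \<in> J" for j
    using hbij that by (simp add: bij_betw_def the_inv_into_f_f)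
  have hJ: "h j \<in> W" if "j \<in> J" for j using hbij that bij_betwE by blast
  have balW: "bal (h j) = cbj j" if "j \<in> J" for j using invh[OF that] hJ[OF that] by (simp add: bal_def)
  have Wh: "\<exists>j\<in>J. v = h j" if "v \<in> W" for v using hbij that by (auto simp: bij_betw_def)
  have balR: "bal v = Lx" if "v \<in> R" for v using that dWR by (auto simp: bal_def)
  have balR': "bal v = converse Lx" if "v \<in> R'" for v using that dWR by (auto simp: bal_def)
  have balout: "bal v = {}" if "v \<notin> V" for v using that WV by (auto simp: bal_def)
  have balslo: "strict_linear_order_on (set cs) (bal v) \<and> bal v \<subseteq> set cs \<times> set cs" if v: "v \<in> V" for v
  proof -
    consider "v \<in> W" | "v \<in> R" | "v \<in> R'" using Vu v by blast
    then show ?thesis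
    proof cases
      case 1
      then obtain j where j: "j \<in> J" "v = h j" using Wh by blast
      then show ?thesis using balW cbj_slo cbj_sub J_def by simp
    next
      case 2
      then show ?thesis using balR Lx_slo Lx_sub by simp
    next
      case 3
      then show ?thesis using balR' slo_converse[OF Lx_slo] Lx_sub by auto
    qed
  qed
  have wfP': "wf_profile P'"
    unfolding wf_profile_def P'_def using finV Vne balslo balout xs by auto
  have xyb: "(x,y) \<in> bal v \<longleftrightarrow> v \<in> A'" if v: "v \<in> V" for v
  proof -
    consider "v \<in> W" | "v \<in> R" | "v \<in> R'" using Vu v by blast
    then show ?thesis
    proof cases
      case 1
      then obtain j where j: "j \<in> J" "v = h j" using Wh by blast
      show ?thesis
      proof (cases "j \<in> JA")
        case True
        then have "v \<in> A0" using j hA bij_betwE by (fastforce simp: h_def)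
        then have "v \<in> A'" using A0(1) by blast
        moreover have "(x,y) \<in> bal v" using True j balW by (simp add: JA_def)
        ultimately show ?thesis by simp
      next
        case False
        then have jB: "j \<in> JB" using j(1) JABu by blast
        then have "v \<in> B0" using j hB bij_betwE False by (fastforce simp: h_def)
        then have "v \<notin> A'" using B0(1) ABd by blast
        moreover have "(x,y) \<notin> bal v" using jB j balW pairJ by (simp add: JB_def)
        ultimately show ?thesis by simp
      qed
    next
      case 2
      then show ?thesis using balR Lxy R_def by simp
    next
      case 3
      then have "v \<notin> A'" using ABd R'_def by blast
      then show ?thesis using 3 balR' Lyx by simp
    qed
  qed
  have agree: "(x,y) \<in> ballot P' v \<longleftrightarrow> (x,y) \<in> ballot P v" if "v \<in> V" for v
    using xyb[OF that] that by (simp add: P'_def A'_def)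
  have agree2: "(y,x) \<in> ballot P' v \<longleftrightarrow> (y,x) \<in> ballot P v" if "v \<in> V" for v
  proof -
    have "(x,y) \<in> ballot P' v \<longleftrightarrow> (y,x) \<notin> ballot P' v"
      using ballot_pair[OF wfP', of v x y] that xs xy by (simp add: P'_def)
    then show ?thesis using agree[OF that] pairP[OF that] by blast
  qed
  have restr: "\<forall>i\<in>voters P. ballot P' i \<inter> ({x,y}\<times>{x,y}) = ballot P i \<inter> ({x,y}\<times>{x,y})"
  proof
    fix i assume i: "i \<in> voters P"
    then have iV: "i \<in> V" by (simp add: V_def)
    have s1: "strict_linear_order_on (set cs) (ballot P' i)" using balslo[OF iV] by (simp add: P'_def)
    have s2: "strict_linear_order_on (cands P) (ballot P i)" using wf i unfolding wf_profile_def by blast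
    show "ballot P' i \<inter> ({x,y}\<times>{x,y}) = ballot P i \<inter> ({x,y}\<times>{x,y})"
      by (rule slo_restr_eq[OF s1 s2 xs xP xy agree[OF iV]])
  qed
  have mxy': "margin P' x y = margin P x y" "margin P' y x = margin P y x"
    by (rule margin_cong; use agree agree2 in \<open>simp add: P'_def V_def\<close>)+
  have mP'sum: "margin P' a b = (\<Sum>j\<in>J. wt (cbj j) a b)" for a b
  proof -
    have finW: "finite W" using WV finV finite_subset by blast
    have "margin P' a b = (\<Sum>v\<in>V. wt (bal v) a b)" using margin_sum[of P'] finV by (simp add: P'_def)
    also have "\<dots> = (\<Sum>v\<in>W \<union> R. wt (bal v) a b) + (\<Sum>v\<in>R'. wt (bal v) a b)"
      unfolding Vu by (rule sum.union_disjoint) (use finW finR dWR in auto)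
    also have "(\<Sum>v\<in>W \<union> R. wt (bal v) a b) = (\<Sum>v\<in>W. wt (bal v) a b) + (\<Sum>v\<in>R. wt (bal v) a b)"
      by (rule sum.union_disjoint) (use finW finR dWR in auto)
    also have "(\<Sum>v\<in>W. wt (bal v) a b) = (\<Sum>j\<in>J. wt (bal (h j)) a b)"
      using sum.reindex_bij_betw[OF hbij, of "\<lambda>v. wt (bal v) a b"] by simp
    also have "\<dots> = (\<Sum>j\<in>J. wt (cbj j) a b)" by (rule sum.cong) (simp_all add: balW)
    also have "(\<Sum>v\<in>R. wt (bal v) a b) = int (card R) * wt Lx a b" using balR by simp
    also have "(\<Sum>v\<in>R'. wt (bal v) a b) = int (card R') * wt (converse Lx) a b" using balR' by simp
    finally show ?thesis using cR wt_converse[of Lx a b] by simp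
  qed
  have coh: "coherent_step P x y P'"
    unfolding coherent_step_def
  proof (intro conjI)
    show "voters P' = voters P" by (simp add: P'_def V_def)
    show "x \<in> cands P'" "y \<in> cands P'" using xs by (simp_all add: P'_def)
    show "cands P' \<subseteq> cands P" using csP by (simp add: P'_def)
    show "\<forall>i\<in>voters P. ballot P' i \<inter> ({x,y}\<times>{x,y}) = ballot P i \<inter> ({x,y}\<times>{x,y})" by (rule restr)
    show "0 < margin P x y \<longrightarrow> margin P' x y = margin P x y" using mxy' by simp
    show "0 < margin P y x \<longrightarrow> margin P' y x = margin P y x" using mxy' by simp
    show "\<forall>a\<in>cands P'. \<forall>b\<in>cands P'. 0 < margin P' a b \<longrightarrow> 0 < margin P a b \<and> margin P' a b \<le> margin P a b \<and>
        ({a, b} = {x, y} \<longrightarrow> margin P' a b = margin P a b)"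
    proof (intro ballI impI)
      fix a b assume a: "a \<in> cands P'" and b: "b \<in> cands P'" and pos: "0 < margin P' a b"
      obtain p where p: "p < k" "a = cs!p" using set_nth a by (auto simp: P'_def)
      obtain q where q: "q < k" "b = cs!q" using set_nth b by (auto simp: P'_def)
      have val: "margin P' a b = (if p = q then 0 else int m * ((if q = sk k p then 2 else 0) - (if p = sk k q then 2 else 0)))"
        using mP'sum core_val[OF p(1) q(1), of m] p q J_def by simp
      have qs: "q = sk k p" and mv: "margin P' a b = 2 * int m"
        using pos val mpos by (auto split: if_splits)
      have ge: "2 * int m \<le> margin P a b"
      proof (cases "Suc p = k")
        case True
        then have pk: "p = k - 1" by linarith
        have q0: "q = 0" using qs True unfolding sk_def by simp
        have "a = x" using p(2) xd pk by simp
        moreover have "b = y" using q(2) yd q0 by simp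
        ultimately show ?thesis using mxy by simp
      next
        case False
        then have "q = Suc p" "Suc p < k" using qs p unfolding sk_def by auto
        then show ?thesis using path[of p] p q mxy by simp
      qed
      show "0 < margin P a b \<and> margin P' a b \<le> margin P a b \<and> ({a, b} = {x, y} \<longrightarrow> margin P' a b = margin P a b)"
      proof (intro conjI impI)
        show "0 < margin P a b" using ge mpos by simp
        show "margin P' a b \<le> margin P a b" using ge mv by simp
        assume "{a, b} = {x, y}"
        then have "(a = x \<and> b = y) \<or> (a = y \<and> b = x)" by (auto simp: doubleton_eq_iff)
        then show "margin P' a b = margin P a b" using mxy' by auto
      qed
    qed
  qed
  have injg: "inj_on g R" and gR: "g ` R = R'" using g by (auto simp: bij_betw_def)
  have Wne: "W \<noteq> {}"
  proof -
    have "(0, 0, 0) \<in> J" unfolding J_def JJ_def using mpos k1 by auto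
    then show ?thesis using hJ by blast
  qed
  have FP': "F P' = F (remove_voters P' W)"
  proof (rule remove_pairs[OF NR finR(1) wfP'])
    show "voters P' = W \<union> R \<union> g ` R" using Vu gR by (simp add: P'_def)
    show "\<forall>r\<in>R. ballot P' (g r) = converse (ballot P' r)"
    proof
      fix r assume r: "r \<in> R"
      then have "g r \<in> R'" using gR by blast
      then show "ballot P' (g r) = converse (ballot P' r)" using balR' balR r by (simp add: P'_def)
    qed
  qed (use Wne dWR gR injg in auto)
  define Core where "Core = remove_voters P' W"
  have wfC: "wf_profile Core" unfolding Core_def
    by (rule remove_voters_wf[OF wfP']) (use WV Wne in \<open>simp_all add: P'_def\<close>)
  have "cs!0 \<in> F Core"
  proof (rule core_sym[OF N A VS wfC])
    show "voters Core = W" by (simp add: Core_def remove_voters_def)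
    show "cands Core = set cs" by (simp add: Core_def remove_voters_def P'_def)
    show "bij_betw h (JJ m) W" using hbij J_def by simp
    show "ballot Core (h j) = cbj j" if "j \<in> JJ m" for j
      using that hJ balW J_def by (simp add: Core_def remove_voters_def P'_def)
  qed
  then have "y \<in> F P'" using FP' yd Core_def by simp
  then show ?thesis using wfP' coh by blast
qed

end


lemma main_lemma:
  fixes F :: "('v, 'c) profile \<Rightarrow> 'c set" and P :: "('v, 'c) profile"
  assumes inf: "infinite (UNIV :: 'v set)"
    and VS: "VSCC F" and A: "anonymity F" and N: "neutrality F" and U: "upward_homogeneity F"
    and NR: "neutral_reversal F" and M: "monotonicity_two F" and CI: "coherent_IIA F"
    and wf: "wf_profile P" and ysc: "y \<in> split_cycle P"
    and ev: "\<forall>a b. even (margin P a b)"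
    and big: "\<forall>x\<in>cands P. x \<noteq> y \<longrightarrow> margin P x y * int (card (cands P)) \<le> 2 * int (card {v \<in> voters P. (y,x) \<in> ballot P v})"
  shows "y \<in> F P"
proof (rule ccontr)
  assume nF: "y \<notin> F P"
  have yc: "y \<in> cands P" using ysc unfolding split_cycle_def by blast
  obtain x where xc: "x \<in> cands P" and allP: "\<forall>P'. wf_profile P' \<and> coherent_step P x y P' \<longrightarrow> y \<notin> F P'"
    using CI[unfolded coherent_IIA_def] wf yc nF by blast
  show False
  proof (cases "x = y")
    case True
    have wf': "wf_profile (restrict P {y})" using restrict_wf[OF wf] yc by simp
    have coh: "coherent_step P x y (restrict P {y})" using restrict_coherent[of x "{y}" y P] True yc by simp
    have "F (restrict P {y}) \<noteq> {}" "F (restrict P {y}) \<subseteq> {y}" using VSCC_D[OF VS wf'] by auto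
    then have "y \<in> F (restrict P {y})" by blast
    then show False using allP wf' coh by blast
  next
    case xy: False
    show False
    proof (cases "margin P x y \<le> 0")
      case True
      have sub: "{x,y} \<subseteq> cands P" using xc yc by simp
      have wf': "wf_profile (restrict P {x,y})" using restrict_wf[OF wf sub] by simp
      have coh: "coherent_step P x y (restrict P {x,y})" using restrict_coherent[OF _ _ sub] by simp
      have "margin (restrict P {x,y}) y x = margin P y x" by (rule restrict_margin) auto
      then have "margin (restrict P {x,y}) y x \<ge> 0" using True margin_anti[of P x y] by simp
      then have "y \<in> F (restrict P {x,y})"
        using two_cand[OF N A VS M U inf wf', of x y] xy by simp
      then show False using allP wf' coh by blast
    next
      case False
      then have pos: "0 < margin P x y" by simp
      have "\<not> sc_defeat P x y" using ysc unfolding split_cycle_def by blast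
      then have "\<not> (\<forall>cs. majority_path P cs y x \<longrightarrow> (\<exists>k. Suc k < length cs \<and> margin P (cs!k) (cs!Suc k) < margin P x y))"
        using pos unfolding sc_defeat_alt by blast
      then obtain cs where mp: "majority_path P cs y x"
        and nstr: "\<not> (\<exists>k. Suc k < length cs \<and> margin P (cs!k) (cs!Suc k) < margin P x y)" by blast
      have str: "\<forall>i. Suc i < length cs \<longrightarrow> margin P x y \<le> margin P (cs!i) (cs!Suc i)"
        using nstr by (meson not_less)
      define Rl where "Rl = (\<lambda>a b. margin P x y \<le> margin P a b \<and> 0 < margin P a b)"
      have "successively Rl cs" unfolding successively_conv_nth Rl_def
        using str mp unfolding majority_path_def by blast
      moreover have "cs \<noteq> []" using mp unfolding majority_path_def by auto
      ultimately obtain ds where ds: "distinct ds" "successively Rl ds" "ds \<noteq> []" "hd ds = hd cs"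
        "last ds = last cs" "set ds \<subseteq> set cs" using simple_succ by blast
      have hd: "hd ds = y" and lst: "last ds = x" using ds(4,5) mp unfolding majority_path_def by auto
      have dsP: "set ds \<subseteq> cands P" using ds(6) mp unfolding majority_path_def by auto
      have l2: "length ds \<ge> 2"
      proof (rule ccontr)
        assume "\<not> length ds \<ge> 2"
        moreover have "length ds \<noteq> 0" using ds(3) by simp
        ultimately have "length ds = 1" by linarith
        then have "hd ds = last ds" by (cases ds) auto
        then show False using hd lst xy by simp
      qed
      have l3: "length ds \<ge> 3"
      proof (rule ccontr)
        assume "\<not> length ds \<ge> 3"
        then have l: "length ds = 2" using l2 by simp
        then have "ds = [ds!0, ds!1]" by (cases ds; cases "tl ds") auto
        then have "ds = [y, x]" using hd lst by (metis last_ConsL last_ConsR list.sel(1) list.simps(3))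
        then have "Rl y x" using ds(2) by simp
        then have "0 < margin P y x" unfolding Rl_def by simp
        then show False using pos margin_anti[of P x y] by simp
      qed
      interpret cyc ds using ds(1) l3 by unfold_locales
      have y0: "y = ds!0" using hd ds(3) by (simp add: hd_conv_nth)
      have xk: "x = ds!(length ds - 1)" using lst ds(3) by (simp add: last_conv_nth)
      have path: "margin P x y \<le> margin P (ds!i) (ds!Suc i)" if "Suc i < length ds" for i
        using successively_nth[OF ds(2) that] unfolding Rl_def by blast
      obtain m where m: "margin P x y = 2 * int m"
      proof -
        obtain c where "margin P x y = 2 * c" using ev by (meson evenE)
        then show ?thesis using that[of "nat c"] pos by simp
      qed
      have mpos: "0 < m" using m pos by simp
      have finC: "finite (cands P)" using wf wf_fin by auto
      have "length ds = card (set ds)" using ds(1) by (simp add: distinct_card)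
      also have "\<dots> \<le> card (cands P)" using card_mono[OF finC dsP] .
      finally have kc: "length ds \<le> card (cands P)" .
      have cnt: "int m * int (length ds - 1) \<le> int (card {v \<in> voters P. (y,x) \<in> ballot P v})"
      proof -
        have "int m * int (length ds - 1) \<le> int m * int (card (cands P))"
          using kc by (intro mult_left_mono) auto
        moreover have "2 * (int m * int (card (cands P))) \<le> 2 * int (card {v \<in> voters P. (y,x) \<in> ballot P v})"
        proof -
          have b: "margin P x y * int (card (cands P)) \<le> 2 * int (card {v \<in> voters P. (y,x) \<in> ballot P v})"
            using big xc xy by blast
          then show ?thesis unfolding m by (simp only: mult.assoc)
        qed
        ultimately show ?thesis by linarith
      qed
      obtain P' where P': "wf_profile P'" "coherent_step P x y P'" "y \<in> F P'"
        using cycle_step[OF N A NR VS wf dsP xk y0 path m mpos cnt] by blast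
      then show False using allP by blast
    qed
  qed
qed

theorem theorem6p4:
  fixes F :: "('v, 'c) profile \<Rightarrow> 'c set"
  assumes "infinite (UNIV :: 'v set)" and "infinite (UNIV :: 'c set)"
    and "VSCC F" and "anonymity F" and "neutrality F" and "upward_homogeneity F"
    and "neutral_reversal F" and "monotonicity_two F" and "coherent_IIA F"
  shows "\<forall>P. wf_profile P \<longrightarrow> split_cycle P \<subseteq> F P"
proof (intro allI impI subsetI)
  fix P :: "('v, 'c) profile" and y assume wf: "wf_profile P" and ysc: "y \<in> split_cycle P"
  have yc: "y \<in> cands P" using ysc unfolding split_cycle_def by blast
  show "y \<in> F P"
  proof (rule ccontr)
    assume nF: "y \<notin> F P"
    obtain P2 where P2: "wf_profile P2" "doubling P P2" "cands P2 = cands P" "\<forall>a b. margin P2 a b = 2 * margin P a b"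
      using doubling_exists[OF wf assms(1)] by blast
    have "F P2 \<subseteq> F P" using assms(6) wf P2(1,2) unfolding upward_homogeneity_def by blast
    then have nF2: "y \<notin> F P2" using nF by blast
    have sc2: "split_cycle P2 = split_cycle P" by (rule sc_scale[of _ _ 2]) (use P2 in auto)
    define T where "T = card (voters P2) * card (cands P2)"
    obtain P1 where P1: "wf_profile P1" "cands P1 = cands P2" "F P1 = F P2"
      "\<forall>a b. margin P1 a b = margin P2 a b"
      "\<forall>x\<in>cands P2. x \<noteq> y \<longrightarrow> card {v \<in> voters P1. (y,x) \<in> ballot P1 v} \<ge> T"
      using add_pairs[OF P2(1) assms(1) assms(7), of y T] yc P2(3) by blast
    have sc1: "split_cycle P1 = split_cycle P2" by (rule sc_scale[of _ _ 1]) (use P1 in auto)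
    have ev: "\<forall>a b. even (margin P1 a b)" using P1(4) P2(4) by simp
    have finV2: "finite (voters P2)" using P2(1) wf_fin by auto
    have big: "\<forall>x\<in>cands P1. x \<noteq> y \<longrightarrow> margin P1 x y * int (card (cands P1)) \<le> 2 * int (card {v \<in> voters P1. (y,x) \<in> ballot P1 v})"
    proof (intro ballI impI)
      fix x assume x: "x \<in> cands P1" "x \<noteq> y"
      have "margin P1 x y \<le> int (card (voters P2))" using margin_le_card[OF finV2] P1(4) by simp
      then have "margin P1 x y * int (card (cands P1)) \<le> int (card (voters P2)) * int (card (cands P1))"
        by (intro mult_right_mono) auto
      also have "\<dots> = int T" unfolding T_def using P1(2) by simp
      also have "\<dots> \<le> int (card {v \<in> voters P1. (y,x) \<in> ballot P1 v})" using P1(5) P1(2) x by simp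
      finally show "margin P1 x y * int (card (cands P1)) \<le> 2 * int (card {v \<in> voters P1. (y,x) \<in> ballot P1 v})"
        by simp
    qed
    have "y \<in> F P1"
      by (rule main_lemma[OF assms(1) assms(3-9) P1(1) _ ev big]) (use ysc sc1 sc2 in simp)
    then show False using P1(3) nF2 by simp
  qed
qed

end
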